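(* Let $f:\{0,1\}^n\times\{0,1\}^n\to\{0,1\}$ be a Boolean function and $d\ge1$. If there is a quantum protocol for $f$ with communication $c$ and error $1/3$, then there are a real $\alpha\in[0,1]$ and a set of $2^{O(dc)}$ rectangles $R_i$ with weights $w_i\in\{-\alpha,\alpha\}$ such that for all $(x,y)$: \[\sum_i w_iR_i[x,y]\in\begin{cases}[1-2^{-d},1]&\text{if } f(x,y)=1,\\ [0,2^{-d}]&\text{if } f(x,y)=0.\end{cases}\]
   Context: A rectangle is a set $A\times B$ with $A,B\subseteq\{0,1\}^n$; $R_i[x,y]$ denotes its characteristic function. Quantum communication model (Yao, no prior entanglement): Alice receives $x$, Bob $y$; each holds private qubits initialized to the input and $|0\rangle$; in each round one player applies a unitary to his qubits and sends one qubit; at the end a qubit is measured giving the output; communication is the number of qubits exchanged; error $1/3$ means the output equals $f(x,y)$ with probability at least $2/3$ on every input. The constant in $O$ is absolute. *)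

theory Defs
  imports Complex_Main
begin

text \<open>Computational basis states of a register of qubits indexed by naturals:
  a basis state is an assignment nat => bool (qubits outside the register are False).\<close>
type_synonym basis = "nat \<Rightarrow> bool"

definition local_basis :: "nat set \<Rightarrow> basis set" where
  "local_basis S = {w. \<forall>i. i \<notin> S \<longrightarrow> \<not> w i}"

definition restr :: "basis \<Rightarrow> nat set \<Rightarrow> basis" where
  "restr z S = (\<lambda>i. i \<in> S \<and> z i)"

definition merge :: "basis \<Rightarrow> basis \<Rightarrow> nat set \<Rightarrow> basis" where
  "merge z w S = (\<lambda>i. if i \<in> S then w i else z i)"

text \<open>Apply an operator U (a matrix indexed by basis states of the qubits in S)
  to the qubits in S of the global state psi, i.e. (U tensor Id) psi.\<close>
definition apply_local ::
  "nat set \<Rightarrow> (basis \<Rightarrow> basis \<Rightarrow> complex) \<Rightarrow> (basis \<Rightarrow> complex) \<Rightarrow> basis \<Rightarrow> complex" where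
  "apply_local S U \<psi> z = (\<Sum>w\<in>local_basis S. U (restr z S) w * \<psi> (merge z w S))"

definition unitary_on :: "nat set \<Rightarrow> (basis \<Rightarrow> basis \<Rightarrow> complex) \<Rightarrow> bool" where
  "unitary_on S U \<longleftrightarrow> finite S \<and>
     (\<forall>v\<in>local_basis S. \<forall>w\<in>local_basis S.
        (\<Sum>u\<in>local_basis S. cnj (U u v) * U u w) = (if v = w then 1 else 0))"

text \<open>A round: (sender, unitary, sent qubit). Sender True = Alice, False = Bob.
  The sender applies the unitary to all qubits he currently holds, then sends
  one of them to the other player. OA is the set of qubits held by Alice;
  Bob holds the remaining qubits among 0..<N.\<close>
type_synonym round = "bool \<times> (basis \<Rightarrow> basis \<Rightarrow> complex) \<times> nat"

definition owned :: "nat \<Rightarrow> nat set \<Rightarrow> bool \<Rightarrow> nat set" where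
  "owned N OA p = (if p then OA else {0..<N} - OA)"

definition transfer :: "nat set \<Rightarrow> bool \<Rightarrow> nat \<Rightarrow> nat set" where
  "transfer OA p q = (if p then OA - {q} else OA \<union> {q})"

fun valid_rounds :: "nat \<Rightarrow> nat set \<Rightarrow> round list \<Rightarrow> bool" where
  "valid_rounds N OA [] = True"
| "valid_rounds N OA ((p, U, q) # rs) \<longleftrightarrow>
     q \<in> owned N OA p \<and> unitary_on (owned N OA p) U \<and> valid_rounds N (transfer OA p q) rs"

fun run :: "nat \<Rightarrow> nat set \<Rightarrow> round list \<Rightarrow> (basis \<Rightarrow> complex) \<Rightarrow> (basis \<Rightarrow> complex)" where
  "run N OA [] \<psi> = \<psi>"
| "run N OA ((p, U, q) # rs) \<psi> = run N (transfer OA p q) rs (apply_local (owned N OA p) U \<psi>)"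

text \<open>Initial basis state: Alice's qubits are 0..<ka, holding x in 0..<n and |0> elsewhere;
  Bob's qubits are ka..<N, holding y in ka..<ka+n and |0> elsewhere.\<close>
definition init_basis :: "nat \<Rightarrow> nat \<Rightarrow> bool list \<Rightarrow> bool list \<Rightarrow> basis" where
  "init_basis n ka x y = (\<lambda>i. (i < n \<and> x ! i) \<or> (ka \<le> i \<and> i < ka + n \<and> y ! (i - ka)))"

definition init_state :: "nat \<Rightarrow> nat \<Rightarrow> bool list \<Rightarrow> bool list \<Rightarrow> basis \<Rightarrow> complex" where
  "init_state n ka x y = (\<lambda>z. if z = init_basis n ka x y then 1 else 0)"

definition prob_one :: "nat \<Rightarrow> nat \<Rightarrow> nat \<Rightarrow> round list \<Rightarrow> nat \<Rightarrow> bool list \<Rightarrow> bool list \<Rightarrow> real" where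
  "prob_one n N ka rs q x y =
     (\<Sum>z\<in>local_basis {0..<N}. if z q then (cmod (run N {0..<ka} rs (init_state n ka x y) z))\<^sup>2 else 0)"

text \<open>A quantum protocol (Yao model, no prior entanglement) on n-bit inputs with
  N qubits in total, Alice initially holding qubits 0..<ka, rounds rs, and output qubit q.\<close>
definition qprotocol :: "nat \<Rightarrow> nat \<Rightarrow> nat \<Rightarrow> round list \<Rightarrow> nat \<Rightarrow> bool" where
  "qprotocol n N ka rs q \<longleftrightarrow> n \<le> ka \<and> ka + n \<le> N \<and> q < N \<and> valid_rounds N {0..<ka} rs"

definition computes_13 ::
  "nat \<Rightarrow> nat \<Rightarrow> nat \<Rightarrow> round list \<Rightarrow> nat \<Rightarrow> (bool list \<Rightarrow> bool list \<Rightarrow> bool) \<Rightarrow> bool" where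
  "computes_13 n N ka rs q f \<longleftrightarrow>
     (\<forall>x y. length x = n \<longrightarrow> length y = n \<longrightarrow>
        (if f x y then prob_one n N ka rs q x y \<ge> 2/3 else prob_one n N ka rs q x y \<le> 1/3))"

definition is_rectangle :: "nat \<Rightarrow> (bool list \<times> bool list) set \<Rightarrow> bool" where
  "is_rectangle n R \<longleftrightarrow> (\<exists>A B. A \<subseteq> {xs. length xs = n} \<and> B \<subseteq> {xs. length xs = n} \<and> R = A \<times> B)"

end

theory Submission
  imports Defs
begin

definition jn :: "basis \<Rightarrow> basis \<Rightarrow> basis" where "jn u v = (\<lambda>i. u i \<or> v i)"
definition nrm :: "nat set \<Rightarrow> (basis \<Rightarrow> complex) \<Rightarrow> real" where
  "nrm S g = (\<Sum>u\<in>local_basis S. (cmod (g u))^2)"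

lemma lb_eq: "local_basis S = (\<lambda>A i. i \<in> A) ` Pow S"
proof (rule set_eqI, rule iffI)
  fix w assume "w \<in> local_basis S"
  then have "w = (\<lambda>i. i \<in> {i. w i})" "{i. w i} \<subseteq> S" by (auto simp: local_basis_def)
  then show "w \<in> (\<lambda>A i. i \<in> A) ` Pow S" by blast
qed (auto simp: local_basis_def)

lemma finite_lb: "finite S \<Longrightarrow> finite (local_basis S)"
  by (simp add: lb_eq)

lemma restr_in: "restr z S \<in> local_basis S"
  by (simp add: restr_def local_basis_def)

lemma restr_jn1: "S \<inter> T = {} \<Longrightarrow> u \<in> local_basis S \<Longrightarrow> v \<in> local_basis T \<Longrightarrow> restr (jn u v) S = u"
  by (rule ext) (auto simp: restr_def jn_def local_basis_def)

lemma restr_jn2: "S \<inter> T = {} \<Longrightarrow> u \<in> local_basis S \<Longrightarrow> v \<in> local_basis T \<Longrightarrow> restr (jn u v) T = v"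
  by (rule ext) (auto simp: restr_def jn_def local_basis_def)

lemma jn_restr: "z \<in> local_basis (S \<union> T) \<Longrightarrow> jn (restr z S) (restr z T) = z"
  by (rule ext) (auto simp: restr_def jn_def local_basis_def)

lemma jn_in: "u \<in> local_basis S \<Longrightarrow> v \<in> local_basis T \<Longrightarrow> jn u v \<in> local_basis (S \<union> T)"
  by (auto simp: jn_def local_basis_def)

lemma split_sum:
  assumes "S \<inter> T = {}"
  shows "(\<Sum>z\<in>local_basis (S \<union> T). F z) = (\<Sum>u\<in>local_basis S. \<Sum>v\<in>local_basis T. F (jn u v))"
proof -
  have bij: "bij_betw (\<lambda>(u,v). jn u v) (local_basis S \<times> local_basis T) (local_basis (S \<union> T))"
    by (rule bij_betw_byWitness[where f'="\<lambda>z. (restr z S, restr z T)"])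
       (auto simp: restr_jn1[OF assms] restr_jn2[OF assms] jn_restr jn_in restr_in)
  have "(\<Sum>u\<in>local_basis S. \<Sum>v\<in>local_basis T. F (jn u v)) = (\<Sum>(u,v)\<in>local_basis S \<times> local_basis T. F (jn u v))"
    by (rule sum.cartesian_product)
  also have "\<dots> = (\<Sum>z\<in>local_basis (S \<union> T). F z)"
    using sum.reindex_bij_betw[OF bij, of F] by (simp add: case_prod_beta')
  finally show ?thesis by simp
qed

lemma merge_eq: "S \<subseteq> \<Omega> \<Longrightarrow> z \<in> local_basis \<Omega> \<Longrightarrow> w \<in> local_basis S \<Longrightarrow>
   merge z w S = jn w (restr z (\<Omega> - S))"
  by (rule ext) (auto simp: merge_def jn_def restr_def local_basis_def)

lemma isometry:
  assumes U: "unitary_on S U"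
  shows "(\<Sum>u\<in>local_basis S. (cmod (\<Sum>w\<in>local_basis S. U u w * g w))^2) = (\<Sum>w\<in>local_basis S. (cmod (g w))^2)"
proof -
  let ?B = "local_basis S"
  have fin: "finite ?B" using U by (simp add: unitary_on_def finite_lb)
  have orth: "\<And>v w. v \<in> ?B \<Longrightarrow> w \<in> ?B \<Longrightarrow> (\<Sum>u\<in>?B. cnj (U u v) * U u w) = (if v = w then 1 else 0)"
    using U by (simp add: unitary_on_def)
  have "complex_of_real (\<Sum>u\<in>?B. (cmod (\<Sum>w\<in>?B. U u w * g w))^2)
     = (\<Sum>u\<in>?B. (\<Sum>w\<in>?B. U u w * g w) * cnj (\<Sum>w\<in>?B. U u w * g w))"
    by (simp only: of_real_sum complex_norm_square)
  also have "\<dots> = (\<Sum>u\<in>?B. \<Sum>v\<in>?B. \<Sum>w\<in>?B. (cnj (U u v) * U u w) * (g w * cnj (g v)))"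
    by (simp add: sum_distrib_left sum_distrib_right cnj_sum mult_ac)
  also have "\<dots> = (\<Sum>v\<in>?B. \<Sum>u\<in>?B. \<Sum>w\<in>?B. (cnj (U u v) * U u w) * (g w * cnj (g v)))"
    by (rule sum.swap)
  also have "\<dots> = (\<Sum>v\<in>?B. \<Sum>w\<in>?B. \<Sum>u\<in>?B. (cnj (U u v) * U u w) * (g w * cnj (g v)))"
    by (rule sum.cong[OF refl], rule sum.swap)
  also have "\<dots> = (\<Sum>v\<in>?B. \<Sum>w\<in>?B. (\<Sum>u\<in>?B. cnj (U u v) * U u w) * (g w * cnj (g v)))"
    by (simp add: sum_distrib_right)
  also have "\<dots> = (\<Sum>v\<in>?B. \<Sum>w\<in>?B. (if v = w then 1 else 0) * (g w * cnj (g v)))"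
    by (intro sum.cong refl) (simp add: orth)
  also have "\<dots> = (\<Sum>v\<in>?B. \<Sum>w\<in>?B. (if v = w then g w * cnj (g v) else 0))"
    by (intro sum.cong refl) simp
  also have "\<dots> = (\<Sum>w\<in>?B. g w * cnj (g w))"
    using fin by (simp add: sum.delta)
  also have "\<dots> = complex_of_real (\<Sum>w\<in>?B. (cmod (g w))^2)"
    by (simp only: of_real_sum complex_norm_square)
  finally show ?thesis using of_real_eq_iff by blast
qed

definition II :: "nat \<Rightarrow> bool list set" where "II k = {m. length m = k}"

lemma finite_II: "finite (II k)"
proof -
  have "II k = {xs. set xs \<subseteq> (UNIV::bool set) \<and> length xs = k}" by (auto simp: II_def)
  then show ?thesis using finite_lists_length_eq[of "UNIV::bool set" k] by simp
qed

lemma II_Suc_sum: "(\<Sum>m\<in>II (Suc k). F m) = (\<Sum>\<beta>\<in>UNIV. \<Sum>m\<in>II k. F (\<beta> # m))"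
proof -
  have img: "II (Suc k) = (\<lambda>(\<beta>,m). \<beta> # m) ` (UNIV \<times> II k)"
  proof (rule set_eqI, rule iffI)
    fix m assume "m \<in> II (Suc k)"
    then obtain \<beta> m' where "m = \<beta> # m'" "length m' = k" by (cases m) (auto simp: II_def)
    then show "m \<in> (\<lambda>(\<beta>,m). \<beta> # m) ` (UNIV \<times> II k)" by (auto simp: II_def)
  qed (auto simp: II_def)
  have inj: "inj_on (\<lambda>(\<beta>,m). \<beta> # m) (UNIV \<times> II k)" by (auto simp: inj_on_def)
  have "(\<Sum>m\<in>II (Suc k). F m) = sum (F \<circ> (\<lambda>(\<beta>,m). \<beta> # m)) (UNIV \<times> II k)"
    unfolding img by (rule sum.reindex[OF inj])
  also have "\<dots> = (\<Sum>(\<beta>,m)\<in>UNIV \<times> II k. F (\<beta> # m))"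
    by (simp add: comp_def case_prod_beta')
  also have "\<dots> = (\<Sum>\<beta>\<in>UNIV. \<Sum>m\<in>II k. F (\<beta> # m))"
    by (rule sum.cartesian_product[symmetric])
  finally show ?thesis .
qed


lemma apply_rep:
  assumes "S \<subseteq> \<Omega>" "z \<in> local_basis \<Omega>"
    and rep: "\<forall>z\<in>local_basis \<Omega>. \<psi> z = (\<Sum>m\<in>I. a m (restr z S) * b m (restr z (\<Omega> - S)))"
  shows "apply_local S U \<psi> z = (\<Sum>m\<in>I. (\<Sum>w\<in>local_basis S. U (restr z S) w * a m w) * b m (restr z (\<Omega> - S)))"
proof -
  have dis: "S \<inter> (\<Omega> - S) = {}" by blast
  have un: "S \<union> (\<Omega> - S) = \<Omega>" using assms(1) by blast
  have "apply_local S U \<psi> z = (\<Sum>w\<in>local_basis S. U (restr z S) w * \<psi> (jn w (restr z (\<Omega> - S))))"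
    unfolding apply_local_def using merge_eq[OF assms(1,2)] by (intro sum.cong refl) simp
  also have "\<dots> = (\<Sum>w\<in>local_basis S. U (restr z S) w * (\<Sum>m\<in>I. a m w * b m (restr z (\<Omega> - S))))"
  proof (intro sum.cong refl)
    fix w assume w: "w \<in> local_basis S"
    have "jn w (restr z (\<Omega> - S)) \<in> local_basis (S \<union> (\<Omega> - S))" by (rule jn_in[OF w restr_in])
    then have "jn w (restr z (\<Omega> - S)) \<in> local_basis \<Omega>" using un by simp
    then show "U (restr z S) w * \<psi> (jn w (restr z (\<Omega> - S))) = U (restr z S) w * (\<Sum>m\<in>I. a m w * b m (restr z (\<Omega> - S)))"
      using rep restr_jn1[OF dis w restr_in] restr_jn2[OF dis w restr_in] by simp
  qed
  also have "\<dots> = (\<Sum>m\<in>I. (\<Sum>w\<in>local_basis S. U (restr z S) w * a m w) * b m (restr z (\<Omega> - S)))"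
  proof -
    have "(\<Sum>w\<in>local_basis S. U (restr z S) w * (\<Sum>m\<in>I. a m w * b m (restr z (\<Omega> - S))))
       = (\<Sum>w\<in>local_basis S. \<Sum>m\<in>I. U (restr z S) w * a m w * b m (restr z (\<Omega> - S)))"
      by (simp add: sum_distrib_left mult_ac)
    also have "\<dots> = (\<Sum>m\<in>I. \<Sum>w\<in>local_basis S. U (restr z S) w * a m w * b m (restr z (\<Omega> - S)))"
      by (rule sum.swap)
    also have "\<dots> = (\<Sum>m\<in>I. (\<Sum>w\<in>local_basis S. U (restr z S) w * a m w) * b m (restr z (\<Omega> - S)))"
      by (simp add: sum_distrib_right)
    finally show ?thesis .
  qed
  finally show ?thesis .
qed

lemma nrm_split:
  assumes "S \<subseteq> \<Omega>"
  shows "nrm \<Omega> \<phi> = (\<Sum>u\<in>local_basis S. \<Sum>v\<in>local_basis (\<Omega> - S). (cmod (\<phi> (jn u v)))^2)"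
proof -
  have dis: "S \<inter> (\<Omega> - S) = {}" by blast
  have un: "S \<union> (\<Omega> - S) = \<Omega>" using assms(1) by blast
  show ?thesis unfolding nrm_def using split_sum[OF dis, of "\<lambda>z. (cmod (\<phi> z))^2"] un by simp
qed

lemma apply_norm:
  assumes "S \<subseteq> \<Omega>" "unitary_on S U"
  shows "nrm \<Omega> (apply_local S U \<psi>) = nrm \<Omega> \<psi>"
proof -
  have dis: "S \<inter> (\<Omega> - S) = {}" by blast
  have un: "S \<union> (\<Omega> - S) = \<Omega>" using assms(1) by blast
  have key: "apply_local S U \<psi> (jn u v) = (\<Sum>w\<in>local_basis S. U u w * \<psi> (jn w v))"
    if u: "u \<in> local_basis S" and v: "v \<in> local_basis (\<Omega> - S)" for u v
  proof -
    have z: "jn u v \<in> local_basis \<Omega>" using jn_in[OF u v] un by simp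
    show ?thesis unfolding apply_local_def
      using merge_eq[OF assms(1) z] restr_jn1[OF dis u v] restr_jn2[OF dis u v] by (intro sum.cong refl) simp
  qed
  have "nrm \<Omega> (apply_local S U \<psi>) = (\<Sum>u\<in>local_basis S. \<Sum>v\<in>local_basis (\<Omega> - S). (cmod (apply_local S U \<psi> (jn u v)))^2)"
    by (rule nrm_split[OF assms(1)])
  also have "\<dots> = (\<Sum>u\<in>local_basis S. \<Sum>v\<in>local_basis (\<Omega> - S). (cmod (\<Sum>w\<in>local_basis S. U u w * \<psi> (jn w v)))^2)"
    using key by (intro sum.cong refl) simp
  also have "\<dots> = (\<Sum>v\<in>local_basis (\<Omega> - S). \<Sum>u\<in>local_basis S. (cmod (\<Sum>w\<in>local_basis S. U u w * \<psi> (jn w v)))^2)"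
    by (rule sum.swap)
  also have "\<dots> = (\<Sum>v\<in>local_basis (\<Omega> - S). \<Sum>w\<in>local_basis S. (cmod (\<psi> (jn w v)))^2)"
    by (intro sum.cong refl isometry[OF assms(2)])
  also have "\<dots> = (\<Sum>w\<in>local_basis S. \<Sum>v\<in>local_basis (\<Omega> - S). (cmod (\<psi> (jn w v)))^2)"
    by (rule sum.swap)
  also have "\<dots> = nrm \<Omega> \<psi>"
    by (rule nrm_split[OF assms(1), symmetric])
  finally show ?thesis .
qed


lemma upd_inj: "u q = v q \<Longrightarrow> u(q := \<beta>) = v(q := \<beta>) \<Longrightarrow> u = v"
  by (metis fun_upd_triv fun_upd_upd)

lemma send_rep:
  fixes a b :: "bool list \<Rightarrow> basis \<Rightarrow> complex"
  assumes "q \<in> S" "S \<subseteq> \<Omega>" "z \<in> local_basis \<Omega>"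
    and rep: "\<psi> z = (\<Sum>m\<in>II k. a m (restr z S) * b m (restr z (\<Omega> - S)))"
  shows "\<psi> z = (\<Sum>m\<in>II (Suc k). a (tl m) ((restr z (S - {q}))(q := hd m)) *
            ((if restr z (\<Omega> - (S - {q})) q = hd m then 1 else 0) * b (tl m) ((restr z (\<Omega> - (S - {q})))(q := False))))"
proof -
  have e1: "(restr z (S - {q}))(q := z q) = restr z S" using assms(1) by (auto simp: restr_def fun_eq_iff)
  have e2: "restr z (\<Omega> - (S - {q})) q = z q" using assms by (auto simp: restr_def)
  have e3: "(restr z (\<Omega> - (S - {q})))(q := False) = restr z (\<Omega> - S)" using assms(1) by (auto simp: restr_def fun_eq_iff)
  have "(\<Sum>m\<in>II (Suc k). a (tl m) ((restr z (S - {q}))(q := hd m)) *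
            ((if restr z (\<Omega> - (S - {q})) q = hd m then 1 else 0) * b (tl m) ((restr z (\<Omega> - (S - {q})))(q := False))))
     = (\<Sum>\<beta>\<in>UNIV. \<Sum>m\<in>II k. a m ((restr z (S - {q}))(q := \<beta>)) *
            ((if z q = \<beta> then 1 else 0) * b m (restr z (\<Omega> - S))))"
    by (simp add: II_Suc_sum e2 e3)
  also have "\<dots> = (\<Sum>m\<in>II k. a m (restr z S) * b m (restr z (\<Omega> - S)))"
  proof -
    have "(\<Sum>\<beta>\<in>UNIV. \<Sum>m\<in>II k. a m ((restr z (S - {q}))(q := \<beta>)) *
            ((if z q = \<beta> then 1 else 0) * b m (restr z (\<Omega> - S))))
       = (\<Sum>m\<in>II k. a m ((restr z (S - {q}))(q := z q)) * b m (restr z (\<Omega> - S)))"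
      by (cases "z q") (simp_all add: UNIV_bool)
    then show ?thesis by (simp only: e1)
  qed
  finally show ?thesis using rep by simp
qed

lemma send_norm_a:
  assumes "q \<in> S" "finite S"
  shows "nrm (S - {q}) (\<lambda>u. g (u(q := \<beta>))) \<le> nrm S g"
proof -
  have inj: "inj_on (\<lambda>u. u(q := \<beta>)) (local_basis (S - {q}))"
  proof (rule inj_onI)
    fix u v assume "u \<in> local_basis (S - {q})" "v \<in> local_basis (S - {q})" "u(q := \<beta>) = v(q := \<beta>)"
    then show "u = v" by (intro upd_inj[of u q v \<beta>]) (auto simp: local_basis_def)
  qed
  have sub: "(\<lambda>u. u(q := \<beta>)) ` local_basis (S - {q}) \<subseteq> local_basis S"
    using assms(1) by (auto simp: local_basis_def split: if_splits)
  have "nrm (S - {q}) (\<lambda>u. g (u(q := \<beta>))) = (\<Sum>u\<in>(\<lambda>u. u(q := \<beta>)) ` local_basis (S - {q}). (cmod (g u))^2)"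
    unfolding nrm_def by (simp add: sum.reindex[OF inj])
  also have "\<dots> \<le> nrm S g" unfolding nrm_def
    by (rule sum_mono2[OF finite_lb[OF assms(2)] sub]) simp
  finally show ?thesis .
qed

lemma send_norm_b:
  fixes g :: "basis \<Rightarrow> complex"
  assumes "q \<notin> T" "finite T"
  shows "nrm (insert q T) (\<lambda>v. (if v q = \<beta> then 1 else 0) * g (v(q := False))) \<le> nrm T g"
proof -
  have inj: "inj_on (\<lambda>u. u(q := \<beta>)) (local_basis T)"
  proof (rule inj_onI)
    fix u v assume "u \<in> local_basis T" "v \<in> local_basis T" "u(q := \<beta>) = v(q := \<beta>)"
    then show "u = v" using assms(1) by (intro upd_inj[of u q v \<beta>]) (auto simp: local_basis_def)
  qed
  have img: "{v \<in> local_basis (insert q T). v q = \<beta>} = (\<lambda>u. u(q := \<beta>)) ` local_basis T"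
  proof (rule set_eqI, rule iffI)
    fix v assume v: "v \<in> {v \<in> local_basis (insert q T). v q = \<beta>}"
    then have "v = (v(q := False))(q := \<beta>)" "v(q := False) \<in> local_basis T"
      by (auto simp: local_basis_def fun_eq_iff)
    then show "v \<in> (\<lambda>u. u(q := \<beta>)) ` local_basis T" by blast
  qed (auto simp: local_basis_def)
  have fin: "finite (local_basis (insert q T))" using assms(2) by (simp add: finite_lb)
  have "nrm (insert q T) (\<lambda>v. (if v q = \<beta> then 1 else 0) * g (v(q := False)))
      = (\<Sum>v\<in>local_basis (insert q T). if v q = \<beta> then (cmod (g (v(q := False))))^2 else 0)"
    unfolding nrm_def by (intro sum.cong refl) simp
  also have "\<dots> = (\<Sum>v\<in>{v \<in> local_basis (insert q T). v q = \<beta>}. (cmod (g (v(q := False))))^2)"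
    using fin by (simp add: sum.inter_filter)
  also have "\<dots> = (\<Sum>u\<in>local_basis T. (cmod (g ((u(q := \<beta>))(q := False))))^2)"
    by (simp add: img sum.reindex[OF inj])
  also have "\<dots> = nrm T g" unfolding nrm_def
  proof (intro sum.cong refl)
    fix u assume "u \<in> local_basis T"
    then have "(u(q := \<beta>))(q := False) = u" using assms(1) by (auto simp: local_basis_def fun_eq_iff)
    then show "(cmod (g ((u(q := \<beta>))(q := False))))^2 = (cmod (g u))^2" by simp
  qed
  finally show ?thesis by simp
qed

lemma round_rep:
  fixes a :: "'x \<Rightarrow> bool list \<Rightarrow> basis \<Rightarrow> complex" and b :: "'y \<Rightarrow> bool list \<Rightarrow> basis \<Rightarrow> complex"
    and \<psi> :: "'x \<Rightarrow> 'y \<Rightarrow> basis \<Rightarrow> complex"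
  assumes S: "S \<subseteq> \<Omega>" "q \<in> S" "unitary_on S U" "finite \<Omega>"
    and na: "\<forall>x m. m \<in> II k \<longrightarrow> nrm S (a x m) \<le> 1"
    and nb: "\<forall>y m. m \<in> II k \<longrightarrow> nrm (\<Omega> - S) (b y m) \<le> 1"
    and rep: "\<forall>x y. \<forall>z\<in>local_basis \<Omega>. \<psi> x y z = (\<Sum>m\<in>II k. a x m (restr z S) * b y m (restr z (\<Omega> - S)))"
  shows "\<exists>a' b'. (\<forall>x m. m \<in> II (Suc k) \<longrightarrow> nrm (S - {q}) (a' x m) \<le> 1) \<and>
     (\<forall>y m. m \<in> II (Suc k) \<longrightarrow> nrm (\<Omega> - (S - {q})) (b' y m) \<le> 1) \<and>
     (\<forall>x y. \<forall>z\<in>local_basis \<Omega>. apply_local S U (\<psi> x y) z =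
        (\<Sum>m\<in>II (Suc k). a' x m (restr z (S - {q})) * b' y m (restr z (\<Omega> - (S - {q})))))"
proof -
  have finS: "finite S" using S(3) by (simp add: unitary_on_def)
  define a1 where "a1 x m u = (\<Sum>w\<in>local_basis S. U u w * a x m w)" for x m u
  define a' where "a' x m u = a1 x (tl m) (u(q := hd m))" for x m u
  define b' where "b' y m v = (if v q = hd m then 1 else 0) * b y (tl m) (v(q := False))" for y m v
  have rep1: "apply_local S U (\<psi> x y) z = (\<Sum>m\<in>II k. a1 x m (restr z S) * b y m (restr z (\<Omega> - S)))"
    if "z \<in> local_basis \<Omega>" for x y z
    unfolding a1_def using apply_rep[OF S(1) that, where \<psi>="\<psi> x y" and I="II k" and a="a x" and b="b y" and U=U] rep by blast
  have rep2: "apply_local S U (\<psi> x y) z =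
        (\<Sum>m\<in>II (Suc k). a' x m (restr z (S - {q})) * b' y m (restr z (\<Omega> - (S - {q}))))"
    if "z \<in> local_basis \<Omega>" for x y z
    unfolding a'_def b'_def by (rule send_rep[where \<psi>="apply_local S U (\<psi> x y)" and a="a1 x" and b="b y", OF S(2,1) that rep1[OF that]])
  have tl: "tl m \<in> II k" if "m \<in> II (Suc k)" for m using that by (simp add: II_def)
  have n1: "nrm (S - {q}) (a' x m) \<le> 1" if "m \<in> II (Suc k)" for x m
  proof -
    have "nrm (S - {q}) (a' x m) \<le> nrm S (a1 x (tl m))"
      unfolding a'_def by (rule send_norm_a[OF S(2) finS])
    also have "\<dots> = nrm S (a x (tl m))"
      unfolding nrm_def a1_def by (rule isometry[OF S(3)])
    also have "\<dots> \<le> 1" using na tl[OF that] by blast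
    finally show ?thesis .
  qed
  have eqO: "\<Omega> - (S - {q}) = insert q (\<Omega> - S)" using S by blast
  have n2: "nrm (\<Omega> - (S - {q})) (b' y m) \<le> 1" if "m \<in> II (Suc k)" for y m
  proof -
    have "nrm (\<Omega> - (S - {q})) (b' y m) \<le> nrm (\<Omega> - S) (b y (tl m))"
      unfolding b'_def eqO by (rule send_norm_b) (use S in auto)
    also have "\<dots> \<le> 1" using nb tl[OF that] by blast
    finally show ?thesis .
  qed
  show ?thesis using n1 n2 rep2 by blast
qed

lemma run_rep:
  fixes a :: "'x \<Rightarrow> bool list \<Rightarrow> basis \<Rightarrow> complex" and b :: "'y \<Rightarrow> bool list \<Rightarrow> basis \<Rightarrow> complex"
    and \<psi> :: "'x \<Rightarrow> 'y \<Rightarrow> basis \<Rightarrow> complex"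
  assumes "valid_rounds N OA rs" "OA \<subseteq> {0..<N}"
    "\<forall>x m. m \<in> II k \<longrightarrow> nrm OA (a x m) \<le> 1"
    "\<forall>y m. m \<in> II k \<longrightarrow> nrm ({0..<N} - OA) (b y m) \<le> 1"
    "\<forall>x y. \<forall>z\<in>local_basis {0..<N}. \<psi> x y z = (\<Sum>m\<in>II k. a x m (restr z OA) * b y m (restr z ({0..<N} - OA)))"
  shows "\<exists>OA' a' b'. OA' \<subseteq> {0..<N} \<and>
     (\<forall>x m. m \<in> II (k + length rs) \<longrightarrow> nrm OA' (a' x m) \<le> 1) \<and>
     (\<forall>y m. m \<in> II (k + length rs) \<longrightarrow> nrm ({0..<N} - OA') (b' y m) \<le> 1) \<and>
     (\<forall>x y. \<forall>z\<in>local_basis {0..<N}. run N OA rs (\<psi> x y) z =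
        (\<Sum>m\<in>II (k + length rs). a' x m (restr z OA') * b' y m (restr z ({0..<N} - OA'))))"
  using assms
proof (induction rs arbitrary: OA k a b \<psi>)
  case Nil
  then show ?case by auto
next
  case (Cons r rs)
  obtain p U q where r: "r = (p, U, q)" by (cases r)
  show ?case
  proof (cases p)
    case True
    from Cons.prems r True have v: "q \<in> OA" "unitary_on OA U" "valid_rounds N (OA - {q}) rs"
      by (simp_all add: owned_def transfer_def)
    obtain a' b' where
      n1: "\<forall>x m. m \<in> II (Suc k) \<longrightarrow> nrm (OA - {q}) (a' x m) \<le> 1" and
      n2: "\<forall>y m. m \<in> II (Suc k) \<longrightarrow> nrm ({0..<N} - (OA - {q})) (b' y m) \<le> 1" and
      r2: "\<forall>x y. \<forall>z\<in>local_basis {0..<N}. apply_local OA U (\<psi> x y) z =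
        (\<Sum>m\<in>II (Suc k). a' x m (restr z (OA - {q})) * b' y m (restr z ({0..<N} - (OA - {q}))))"
      using round_rep[OF Cons.prems(2) v(1,2) finite_atLeastLessThan Cons.prems(3,4,5)] by blast
    have sub: "OA - {q} \<subseteq> {0..<N}" using Cons.prems(2) by blast
    have run: "run N OA (r # rs) (\<psi> x y) = run N (OA - {q}) rs (apply_local OA U (\<psi> x y))" for x y
      using r True by (simp add: owned_def transfer_def)
    show ?thesis
      using Cons.IH[OF v(3) sub n1 n2, where \<psi>="\<lambda>x y. apply_local OA U (\<psi> x y)"] r2 run by simp
  next
    case False
    let ?\<Omega> = "{0..<N} :: nat set"
    from Cons.prems r False have v: "q \<in> ?\<Omega> - OA" "unitary_on (?\<Omega> - OA) U" "valid_rounds N (insert q OA) rs"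
      by (simp_all add: owned_def transfer_def)
    have e1: "?\<Omega> - (?\<Omega> - OA) = OA" using Cons.prems(2) by blast
    have nb': "\<forall>x m. m \<in> II k \<longrightarrow> nrm (?\<Omega> - (?\<Omega> - OA)) (a x m) \<le> 1" using Cons.prems(3) e1 by simp
    have rep': "\<forall>y x. \<forall>z\<in>local_basis ?\<Omega>. (\<lambda>y x. \<psi> x y) y x z =
       (\<Sum>m\<in>II k. b y m (restr z (?\<Omega> - OA)) * a x m (restr z (?\<Omega> - (?\<Omega> - OA))))"
      using Cons.prems(5) e1 by (simp add: mult.commute)
    obtain b' a' where
      n2: "\<forall>y m. m \<in> II (Suc k) \<longrightarrow> nrm ((?\<Omega> - OA) - {q}) (b' y m) \<le> 1" and
      n1: "\<forall>x m. m \<in> II (Suc k) \<longrightarrow> nrm (?\<Omega> - ((?\<Omega> - OA) - {q})) (a' x m) \<le> 1" and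
      r2: "\<forall>y x. \<forall>z\<in>local_basis ?\<Omega>. apply_local (?\<Omega> - OA) U ((\<lambda>y x. \<psi> x y) y x) z =
        (\<Sum>m\<in>II (Suc k). b' y m (restr z ((?\<Omega> - OA) - {q})) * a' x m (restr z (?\<Omega> - ((?\<Omega> - OA) - {q}))))"
      using round_rep[OF _ v(1,2) finite_atLeastLessThan Cons.prems(4) nb' rep'] by blast
    have e2: "?\<Omega> - ((?\<Omega> - OA) - {q}) = insert q OA" "(?\<Omega> - OA) - {q} = ?\<Omega> - insert q OA"
      using Cons.prems(2) v(1) by blast+
    have sub: "insert q OA \<subseteq> ?\<Omega>" using Cons.prems(2) v(1) by blast
    have n1': "\<forall>x m. m \<in> II (Suc k) \<longrightarrow> nrm (insert q OA) (a' x m) \<le> 1" using n1 e2 by simp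
    have n2': "\<forall>y m. m \<in> II (Suc k) \<longrightarrow> nrm (?\<Omega> - insert q OA) (b' y m) \<le> 1" using n2 e2 by simp
    have r2': "\<forall>x y. \<forall>z\<in>local_basis ?\<Omega>. apply_local (?\<Omega> - OA) U (\<psi> x y) z =
        (\<Sum>m\<in>II (Suc k). a' x m (restr z (insert q OA)) * b' y m (restr z (?\<Omega> - insert q OA)))"
      using r2 e2 by (simp add: mult.commute)
    have run: "run N OA (r # rs) (\<psi> x y) = run N (insert q OA) rs (apply_local (?\<Omega> - OA) U (\<psi> x y))" for x y
      using r False by (simp add: owned_def transfer_def)
    show ?thesis
      using Cons.IH[OF v(3) sub n1' n2', where \<psi>="\<lambda>x y. apply_local (?\<Omega> - OA) U (\<psi> x y)"] r2' run by simp
  qed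
qed

lemma run_norm:
  assumes "valid_rounds N OA rs" "OA \<subseteq> {0..<N}"
  shows "nrm {0..<N} (run N OA rs \<psi>) = nrm {0..<N} \<psi>"
  using assms
proof (induction rs arbitrary: OA \<psi>)
  case Nil
  then show ?case by simp
next
  case (Cons r rs)
  obtain p U q where r: "r = (p, U, q)" by (cases r)
  have o: "owned N OA p \<subseteq> {0..<N}" using Cons.prems(2) by (auto simp: owned_def)
  have t: "transfer OA p q \<subseteq> {0..<N}" using Cons.prems r by (auto simp: owned_def transfer_def split: if_splits)
  from Cons.prems r have v: "unitary_on (owned N OA p) U" "valid_rounds N (transfer OA p q) rs" by simp_all
  show ?case using Cons.IH[OF v(2) t] apply_norm[OF o v(1)] r by simp
qed

lemma prob_rep:
  fixes a b :: "bool list \<Rightarrow> basis \<Rightarrow> complex" and q :: nat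
  assumes sub: "OA \<subseteq> \<Omega>" and I: "finite I"
    and rep: "\<forall>z\<in>local_basis \<Omega>. \<psi> z = (\<Sum>m\<in>I. a m (restr z OA) * b m (restr z (\<Omega> - OA)))"
  defines "h1 \<equiv> \<lambda>u. if q \<in> OA then (if u q then 1 else 0) else (1::complex)"
    and "h2 \<equiv> \<lambda>v. if q \<in> OA then 1 else (if v q then 1 else (0::complex))"
  shows "(\<Sum>z\<in>local_basis \<Omega>. if z q then (cmod (\<psi> z))^2 else 0) =
     Re (\<Sum>m\<in>I. \<Sum>m'\<in>I. (\<Sum>u\<in>local_basis OA. h1 u * (a m u * cnj (a m' u))) *
                           (\<Sum>v\<in>local_basis (\<Omega> - OA). h2 v * (b m v * cnj (b m' v))))"
proof -
  have dis: "OA \<inter> (\<Omega> - OA) = {}" by blast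
  have un: "OA \<union> (\<Omega> - OA) = \<Omega>" using sub by blast
  let ?LA = "local_basis OA" and ?LB = "local_basis (\<Omega> - OA)"
  have hq: "(if jn u v q then 1 else 0) = h1 u * h2 v" if "u \<in> ?LA" "v \<in> ?LB" for u v
    using that by (auto simp: h1_def h2_def jn_def local_basis_def)
  have psi: "\<psi> (jn u v) = (\<Sum>m\<in>I. a m u * b m v)" if u: "u \<in> ?LA" and v: "v \<in> ?LB" for u v
  proof -
    have "jn u v \<in> local_basis (OA \<union> (\<Omega> - OA))" by (rule jn_in[OF u v])
    then show ?thesis using rep un restr_jn1[OF dis u v] restr_jn2[OF dis u v] by simp
  qed
  have "complex_of_real (\<Sum>z\<in>local_basis \<Omega>. if z q then (cmod (\<psi> z))^2 else 0)
     = (\<Sum>z\<in>local_basis \<Omega>. (if z q then 1 else 0) * (\<psi> z * cnj (\<psi> z)))"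
    by (simp only: of_real_sum) (intro sum.cong refl, simp add: complex_norm_square[symmetric])
  also have "\<dots> = (\<Sum>u\<in>?LA. \<Sum>v\<in>?LB. (if jn u v q then 1 else 0) * (\<psi> (jn u v) * cnj (\<psi> (jn u v))))"
    using split_sum[OF dis, of "\<lambda>z. (if z q then 1 else 0) * (\<psi> z * cnj (\<psi> z))"] un by simp
  also have "\<dots> = (\<Sum>u\<in>?LA. \<Sum>v\<in>?LB. h1 u * h2 v * ((\<Sum>m\<in>I. a m u * b m v) * cnj (\<Sum>m'\<in>I. a m' u * b m' v)))"
    using hq psi by (intro sum.cong refl) simp
  also have "\<dots> = (\<Sum>u\<in>?LA. \<Sum>v\<in>?LB. \<Sum>m\<in>I. \<Sum>m'\<in>I. (h1 u * (a m u * cnj (a m' u))) * (h2 v * (b m v * cnj (b m' v))))"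
    by (intro sum.cong refl) (simp add: sum_distrib_left sum_distrib_right cnj_sum mult_ac, rule sum.swap)
  also have "\<dots> = (\<Sum>m\<in>I. \<Sum>m'\<in>I. \<Sum>u\<in>?LA. \<Sum>v\<in>?LB. (h1 u * (a m u * cnj (a m' u))) * (h2 v * (b m v * cnj (b m' v))))"
  proof -
    have "(\<Sum>u\<in>?LA. \<Sum>v\<in>?LB. \<Sum>m\<in>I. \<Sum>m'\<in>I. F u v m m') = (\<Sum>m\<in>I. \<Sum>m'\<in>I. \<Sum>u\<in>?LA. \<Sum>v\<in>?LB. F u v m m')"
      for F :: "basis \<Rightarrow> basis \<Rightarrow> bool list \<Rightarrow> bool list \<Rightarrow> complex"
    proof -
      have "(\<Sum>u\<in>?LA. \<Sum>v\<in>?LB. \<Sum>m\<in>I. \<Sum>m'\<in>I. F u v m m') = (\<Sum>u\<in>?LA. \<Sum>m\<in>I. \<Sum>v\<in>?LB. \<Sum>m'\<in>I. F u v m m')"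
        by (intro sum.cong refl sum.swap)
      also have "\<dots> = (\<Sum>u\<in>?LA. \<Sum>m\<in>I. \<Sum>m'\<in>I. \<Sum>v\<in>?LB. F u v m m')"
        by (intro sum.cong refl sum.swap)
      also have "\<dots> = (\<Sum>m\<in>I. \<Sum>u\<in>?LA. \<Sum>m'\<in>I. \<Sum>v\<in>?LB. F u v m m')"
        by (rule sum.swap)
      also have "\<dots> = (\<Sum>m\<in>I. \<Sum>m'\<in>I. \<Sum>u\<in>?LA. \<Sum>v\<in>?LB. F u v m m')"
        by (intro sum.cong refl sum.swap)
      finally show ?thesis .
    qed
    from this[of "\<lambda>u v m m'. h1 u * (a m u * cnj (a m' u)) * (h2 v * (b m v * cnj (b m' v)))"]
    show ?thesis by simp
  qed
  also have "\<dots> = (\<Sum>m\<in>I. \<Sum>m'\<in>I. (\<Sum>u\<in>?LA. h1 u * (a m u * cnj (a m' u))) *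
                           (\<Sum>v\<in>?LB. h2 v * (b m v * cnj (b m' v))))"
    by (simp add: sum_product)
  finally have "complex_of_real (\<Sum>z\<in>local_basis \<Omega>. if z q then (cmod (\<psi> z))^2 else 0) =
     (\<Sum>m\<in>I. \<Sum>m'\<in>I. (\<Sum>u\<in>?LA. h1 u * (a m u * cnj (a m' u))) *
                           (\<Sum>v\<in>?LB. h2 v * (b m v * cnj (b m' v))))" .
  then show ?thesis by (metis Re_complex_of_real)
qed

lemma inner_bound:
  fixes g g' :: "basis \<Rightarrow> complex"
  assumes "finite S" "nrm S g \<le> 1" "nrm S g' \<le> 1" "\<forall>u. cmod (h u) \<le> 1"
  shows "cmod (\<Sum>u\<in>local_basis S. h u * (g u * cnj (g' u))) \<le> 1"
proof -
  have "cmod (\<Sum>u\<in>local_basis S. h u * (g u * cnj (g' u))) \<le> (\<Sum>u\<in>local_basis S. cmod (h u * (g u * cnj (g' u))))"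
    by (rule norm_sum)
  also have "\<dots> \<le> (\<Sum>u\<in>local_basis S. ((cmod (g u))^2 + (cmod (g' u))^2) / 2)"
  proof (rule sum_mono)
    fix u
    have "cmod (h u * (g u * cnj (g' u))) = cmod (h u) * (cmod (g u) * cmod (g' u))"
      by (simp add: norm_mult)
    also have "\<dots> \<le> 1 * (cmod (g u) * cmod (g' u))"
      using assms(4) by (intro mult_right_mono) auto
    also have "\<dots> \<le> ((cmod (g u))^2 + (cmod (g' u))^2) / 2"
      using sum_squares_bound[of "cmod (g u)" "cmod (g' u)"]
      by (simp add: power2_eq_square)
    finally show "cmod (h u * (g u * cnj (g' u))) \<le> ((cmod (g u))^2 + (cmod (g' u))^2) / 2" .
  qed
  also have "\<dots> = (nrm S g + nrm S g') / 2"
    unfolding nrm_def by (simp only: sum_divide_distrib[symmetric] sum.distrib)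
  also have "\<dots> \<le> 1" using assms(2,3) by simp
  finally show ?thesis .
qed

definition rep :: "nat \<Rightarrow> (bool list \<Rightarrow> bool list \<Rightarrow> real) \<Rightarrow> bool" where
  "rep M g \<longleftrightarrow> (\<exists>k a b. k \<le> M \<and> (\<forall>i<k. \<forall>x. \<bar>a i x\<bar> \<le> 1) \<and> (\<forall>i<k. \<forall>y. \<bar>b i y\<bar> \<le> 1) \<and>
      (\<forall>x y. g x y = (\<Sum>i<k. a i x * b i y)))"

lemma rep_of_sum:
  fixes a b :: "'i \<Rightarrow> bool list \<Rightarrow> real"
  assumes "finite I" "card I \<le> M" "\<forall>i\<in>I. \<forall>x. \<bar>a i x\<bar> \<le> 1" "\<forall>i\<in>I. \<forall>y. \<bar>b i y\<bar> \<le> 1"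
  shows "rep M (\<lambda>x y. \<Sum>i\<in>I. a i x * b i y)"
proof -
  obtain h where h: "bij_betw h {0..<card I} I" using ex_bij_betw_nat_finite[OF assms(1)] by blast
  have hi: "h i \<in> I" if "i < card I" for i using h that by (auto simp: bij_betw_def)
  have "(\<Sum>i\<in>I. a i x * b i y) = (\<Sum>i<card I. a (h i) x * b (h i) y)" for x y
    using sum.reindex_bij_betw[OF h, of "\<lambda>i. a i x * b i y"] by (simp add: lessThan_atLeast0)
  then show ?thesis unfolding rep_def using assms hi
    by (intro exI[of _ "card I"] exI[of _ "\<lambda>i. a (h i)"] exI[of _ "\<lambda>i. b (h i)"]) auto
qed

lemma rep_unfold:
  assumes "rep M g"
  obtains k a b where "k \<le> M" "\<forall>i<k. \<forall>x. \<bar>a i x\<bar> \<le> 1" "\<forall>i<k. \<forall>y. \<bar>b i y\<bar> \<le> 1"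
    "\<And>x y. g x y = (\<Sum>i\<in>{..<k}. a i x * b i y)"
  using assms unfolding rep_def by blast

lemma rep_mono:
  assumes "rep M g" "M \<le> M'" shows "rep M' g"
proof -
  obtain k a b where "k \<le> M" "\<forall>i<k. \<forall>x. \<bar>a i x\<bar> \<le> 1" "\<forall>i<k. \<forall>y. \<bar>b i y\<bar> \<le> 1"
      "\<forall>x y. g x y = (\<Sum>i<k. a i x * b i y)" using assms(1) unfolding rep_def by blast
  then show ?thesis unfolding rep_def using assms(2) by (intro exI[of _ k] exI[of _ a] exI[of _ b]) auto
qed

lemma rep_zero: "rep M (\<lambda>x y. 0)"
  unfolding rep_def by (intro exI[of _ 0]) auto

lemma rep_one: "rep 1 (\<lambda>x y. 1)"
  unfolding rep_def by (intro exI[of _ 1] exI[of _ "\<lambda>i x. 1"]) auto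

lemma rep_scale:
  assumes "rep M g" "\<bar>c\<bar> \<le> 1"
  shows "rep M (\<lambda>x y. c * g x y)"
proof -
  obtain k a b where k: "k \<le> M" "\<forall>i<k. \<forall>x. \<bar>a i x\<bar> \<le> 1" "\<forall>i<k. \<forall>y. \<bar>b i y\<bar> \<le> 1"
    "\<And>x y. g x y = (\<Sum>i\<in>{..<k}. a i x * b i y)" using rep_unfold[OF assms(1)] by blast
  have "\<bar>c * a i x\<bar> \<le> 1" if "i < k" for i x
    using k(2) that assms(2) by (simp add: abs_mult mult_le_one)
  then show ?thesis unfolding rep_def using k
    by (intro exI[of _ k] exI[of _ "\<lambda>i x. c * a i x"] exI[of _ b]) (auto simp: sum_distrib_left mult_ac)
qed

lemma rep_mult:
  assumes "rep M1 g1" "rep M2 g2"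
  shows "rep (M1 * M2) (\<lambda>x y. g1 x y * g2 x y)"
proof -
  obtain k1 a1 b1 where k1: "k1 \<le> M1" "\<forall>i<k1. \<forall>x. \<bar>a1 i x\<bar> \<le> 1" "\<forall>i<k1. \<forall>y. \<bar>b1 i y\<bar> \<le> 1"
    "\<And>x y. g1 x y = (\<Sum>i\<in>{..<k1}. a1 i x * b1 i y)" using rep_unfold[OF assms(1)] by blast
  obtain k2 a2 b2 where k2: "k2 \<le> M2" "\<forall>i<k2. \<forall>x. \<bar>a2 i x\<bar> \<le> 1" "\<forall>i<k2. \<forall>y. \<bar>b2 i y\<bar> \<le> 1"
    "\<And>x y. g2 x y = (\<Sum>i\<in>{..<k2}. a2 i x * b2 i y)" using rep_unfold[OF assms(2)] by blast
  have eq: "g1 x y * g2 x y = (\<Sum>p\<in>{..<k1} \<times> {..<k2}. (a1 (fst p) x * a2 (snd p) x) * (b1 (fst p) y * b2 (snd p) y))" for x y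
    unfolding k1(4) k2(4) sum_product sum.cartesian_product by (intro sum.cong refl) (auto simp: mult_ac)
  have "rep (M1 * M2) (\<lambda>x y. \<Sum>p\<in>{..<k1} \<times> {..<k2}. (a1 (fst p) x * a2 (snd p) x) * (b1 (fst p) y * b2 (snd p) y))"
    using k1 k2 by (intro rep_of_sum) (auto simp: abs_mult mult_le_one mult_le_mono)
  then show ?thesis using eq by simp
qed

lemma rep_add:
  assumes "rep M1 g1" "rep M2 g2"
  shows "rep (M1 + M2) (\<lambda>x y. g1 x y + g2 x y)"
proof -
  obtain k1 a1 b1 where k1: "k1 \<le> M1" "\<forall>i<k1. \<forall>x. \<bar>a1 i x\<bar> \<le> 1" "\<forall>i<k1. \<forall>y. \<bar>b1 i y\<bar> \<le> 1"
    "\<And>x y. g1 x y = (\<Sum>i\<in>{..<k1}. a1 i x * b1 i y)" using rep_unfold[OF assms(1)] by blast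
  obtain k2 a2 b2 where k2: "k2 \<le> M2" "\<forall>i<k2. \<forall>x. \<bar>a2 i x\<bar> \<le> 1" "\<forall>i<k2. \<forall>y. \<bar>b2 i y\<bar> \<le> 1"
    "\<And>x y. g2 x y = (\<Sum>i\<in>{..<k2}. a2 i x * b2 i y)" using rep_unfold[OF assms(2)] by blast
  define I where "I = Inl ` {..<k1} \<union> Inr ` {..<k2}"
  define a where "a = case_sum a1 a2"
  define b where "b = case_sum b1 b2"
  have dis: "Inl ` {..<k1} \<inter> Inr ` {..<k2} = {}" by auto
  have cI: "card I = k1 + k2" unfolding I_def
    by (subst card_Un_disjoint[OF _ _ dis]) (auto simp: card_image)
  have eq: "g1 x y + g2 x y = (\<Sum>i\<in>I. a i x * b i y)" for x y
    unfolding I_def k1(4) k2(4)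
    by (subst sum.union_disjoint[OF _ _ dis]) (auto simp: sum.reindex a_def b_def)
  have "rep (M1 + M2) (\<lambda>x y. \<Sum>i\<in>I. a i x * b i y)"
    using k1 k2 cI by (intro rep_of_sum) (auto simp: I_def a_def b_def)
  then show ?thesis using eq by simp
qed

lemma rep_pow: "rep M g \<Longrightarrow> rep (M ^ n) (\<lambda>x y. (g x y) ^ n)"
proof (induction n)
  case 0
  then show ?case using rep_one by simp
next
  case (Suc n)
  have "rep (M * M ^ n) (\<lambda>x y. g x y * (g x y) ^ n)" by (rule rep_mult[OF Suc.prems Suc.IH[OF Suc.prems]])
  then show ?case by simp
qed

lemma rep_sum:
  assumes "finite F" "\<forall>S\<in>F. rep M (G S)"
  shows "rep (card F * M) (\<lambda>x y. \<Sum>S\<in>F. G S x y)"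
  using assms
proof (induction F rule: finite_induct)
  case empty
  then show ?case using rep_zero by simp
next
  case (insert S F)
  have "rep (M + card F * M) (\<lambda>x y. G S x y + (\<Sum>S\<in>F. G S x y))"
    using insert by (intro rep_add) auto
  then show ?case using insert by simp
qed

definition amp :: "nat \<Rightarrow> real \<Rightarrow> real" where
  "amp D t = (\<Sum>S\<in>{S\<in>Pow {..<D}. D < 2 * card S}. t ^ card S * (1 - t) ^ (D - card S))"

lemma amp_total: "(\<Sum>S\<in>Pow {..<D}. t ^ card S * (1 - t) ^ (D - card S)) = (1::real)"
proof -
  have "(\<Prod>i\<in>{..<D}. t + (1 - t)) = (\<Sum>S\<in>Pow {..<D}. (\<Prod>i\<in>S. t) * (\<Prod>i\<in>{..<D} - S. 1 - t))"
    by (rule prod_add) simp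
  also have "\<dots> = (\<Sum>S\<in>Pow {..<D}. t ^ card S * (1 - t) ^ (D - card S))"
  proof (intro sum.cong refl)
    fix S assume "S \<in> Pow {..<D}"
    then have "card ({..<D} - S) = D - card S" by (simp add: card_Diff_subset finite_subset)
    then show "(\<Prod>i\<in>S. t) * (\<Prod>i\<in>{..<D} - S. 1 - t) = t ^ card S * (1 - t) ^ (D - card S)" by simp
  qed
  finally show ?thesis by simp
qed

lemma pow_bal:
  fixes a b :: real
  assumes "0 \<le> a" "a \<le> b" "h \<le> k" "k \<le> 2 * h"
  shows "a ^ k * b ^ (2 * h - k) \<le> (a * b) ^ h"
proof -
  have "a ^ k * b ^ (2 * h - k) = a ^ h * (a ^ (k - h) * b ^ (2 * h - k))"
    using assms(3) by (simp add: power_add[symmetric])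
  also have "\<dots> \<le> a ^ h * (b ^ (k - h) * b ^ (2 * h - k))"
    using assms by (intro mult_left_mono mult_right_mono power_mono) auto
  also have "\<dots> = (a * b) ^ h"
    using assms(3,4) by (simp add: power_add[symmetric] power_mult_distrib)
  finally show ?thesis .
qed

lemma card_F_le: "card {S\<in>Pow {..<D::nat}. P S} \<le> 2 ^ D"
proof -
  have "card {S\<in>Pow {..<D::nat}. P S} \<le> card (Pow {..<D})" by (intro card_mono) auto
  then show ?thesis by (simp add: card_Pow)
qed

lemma amp_low:
  assumes "0 \<le> t" "t \<le> 1/3"
  shows "0 \<le> amp (2 * h) t \<and> amp (2 * h) t \<le> (8/9) ^ h"
proof -
  let ?F = "{S\<in>Pow {..<2*h}. 2 * h < 2 * card S}"
  have nn: "0 \<le> amp (2 * h) t" unfolding amp_def using assms by (intro sum_nonneg) auto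
  have "amp (2 * h) t \<le> (\<Sum>S\<in>?F. (t * (1 - t)) ^ h)"
    unfolding amp_def
  proof (rule sum_mono)
    fix S assume S: "S \<in> ?F"
    then have "card S \<le> card {..<2*h}" by (intro card_mono) auto
    then have "card S \<le> 2 * h" by simp
    then show "t ^ card S * (1 - t) ^ (2 * h - card S) \<le> (t * (1 - t)) ^ h"
      using S assms by (intro pow_bal) auto
  qed
  also have "\<dots> = card ?F * (t * (1 - t)) ^ h" by simp
  also have "\<dots> \<le> 2 ^ (2 * h) * (t * (1 - t)) ^ h"
    using assms card_F_le[of "2*h"] by (intro mult_right_mono) (auto simp del: of_nat_power simp: of_nat_power[symmetric])
  also have "\<dots> = (4 * (t * (1 - t))) ^ h" by (simp add: power_mult power_mult_distrib)
  also have "\<dots> \<le> (8/9) ^ h"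
  proof (rule power_mono)
    have "(t - 1/3) * (t - 2/3) \<ge> 0" using assms by (intro mult_nonpos_nonpos) auto
    moreover have "4 * (t * (1 - t)) = 8/9 - 4 * ((t - 1 / 3) * (t - 2 / 3))" by (simp add: field_simps)
    ultimately show "4 * (t * (1 - t)) \<le> 8/9" by simp
  qed (use assms in auto)
  finally show ?thesis using nn by simp
qed

lemma amp_high:
  assumes "2/3 \<le> t" "t \<le> 1"
  shows "1 - (8/9) ^ h \<le> amp (2 * h) t \<and> amp (2 * h) t \<le> 1"
proof -
  let ?P = "Pow {..<2*h}"
  let ?F = "{S\<in>?P. 2 * h < 2 * card S}"
  let ?G = "{S\<in>?P. \<not> 2 * h < 2 * card S}"
  let ?f = "\<lambda>S. t ^ card S * (1 - t) ^ (2 * h - card S)"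
  have s1: "sum ?f (?F \<union> ?G) = sum ?f ?F + sum ?f ?G" by (rule sum.union_disjoint) auto
  have e: "?F \<union> ?G = ?P" by blast
  have split: "sum ?f ?P = sum ?f ?F + sum ?f ?G" using s1 by (simp only: e)
  have tot: "amp (2 * h) t + sum ?f ?G = 1"
    using amp_total[where D="2*h" and t=t] split unfolding amp_def by simp
  have nn: "0 \<le> sum ?f ?G" using assms by (intro sum_nonneg) auto
  have "sum ?f ?G \<le> (\<Sum>S\<in>?G. (t * (1 - t)) ^ h)"
  proof (rule sum_mono)
    fix S assume S: "S \<in> ?G"
    then have k: "card S \<le> h" by auto
    have "(1 - t) ^ (2 * h - card S) * t ^ (2 * h - (2 * h - card S)) \<le> ((1 - t) * t) ^ h"
      using assms k by (intro pow_bal) auto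
    moreover have "2 * h - (2 * h - card S) = card S" using k by simp
    ultimately show "?f S \<le> (t * (1 - t)) ^ h" by (simp add: mult_ac)
  qed
  also have "\<dots> = card ?G * (t * (1 - t)) ^ h" by simp
  also have "\<dots> \<le> 2 ^ (2 * h) * (t * (1 - t)) ^ h"
    using assms card_F_le[of "2*h"] by (intro mult_right_mono) (auto simp del: of_nat_power simp: of_nat_power[symmetric])
  also have "\<dots> = (4 * (t * (1 - t))) ^ h" by (simp add: power_mult power_mult_distrib)
  also have "\<dots> \<le> (8/9) ^ h"
  proof (rule power_mono)
    have "(t - 1/3) * (t - 2/3) \<ge> 0" using assms by (intro mult_nonneg_nonneg) auto
    moreover have "4 * (t * (1 - t)) = 8/9 - 4 * ((t - 1 / 3) * (t - 2 / 3))" by (simp add: field_simps)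
    ultimately show "4 * (t * (1 - t)) \<le> 8/9" by simp
  qed (use assms in auto)
  finally show ?thesis using nn tot by simp
qed

lemma rep_one_minus: "rep M g \<Longrightarrow> rep (Suc M) (\<lambda>x y. 1 - g x y)"
proof -
  assume "rep M g"
  then have "rep (1 + M) (\<lambda>x y. 1 + (-1) * g x y)" by (intro rep_add rep_one rep_scale) auto
  then show ?thesis by simp
qed

lemma rep_amp:
  assumes "rep M g"
  shows "rep (2 ^ D * (Suc M) ^ D) (\<lambda>x y. amp D (g x y))"
proof -
  let ?F = "{S\<in>Pow {..<D}. D < 2 * card S}"
  have "rep (Suc M ^ D) (\<lambda>x y. g x y ^ card S * (1 - g x y) ^ (D - card S))" if "S \<in> ?F" for S
  proof -
    have "card S \<le> card {..<D}" using that by (intro card_mono) auto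
    then have cS: "card S \<le> D" by simp
    have r: "rep (M ^ card S * Suc M ^ (D - card S)) (\<lambda>x y. g x y ^ card S * (1 - g x y) ^ (D - card S))"
      by (intro rep_mult rep_pow rep_one_minus assms)
    have m:  "M ^ card S * Suc M ^ (D - card S) \<le> Suc M ^ card S * Suc M ^ (D - card S)"
      by (intro mult_right_mono power_mono; simp)
    have e: "Suc M ^ card S * Suc M ^ (D - card S) = Suc M ^ D"
      using cS by (simp add: power_add[symmetric])
    show ?thesis using rep_mono[OF r, of "Suc M ^ D"] m e by simp
  qed
  then have r: "rep (card ?F * Suc M ^ D) (\<lambda>x y. \<Sum>S\<in>?F. g x y ^ card S * (1 - g x y) ^ (D - card S))"
    by (intro rep_sum) auto
  have m: "card ?F * Suc M ^ D \<le> 2 ^ D * Suc M ^ D"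
    using card_F_le[of D] by (intro mult_right_mono) auto
  show ?thesis unfolding amp_def by (rule rep_mono[OF r m])
qed

definition cnt :: "nat \<Rightarrow> real \<Rightarrow> nat" where
  "cnt L v = card {j\<in>{1..L}. real j \<le> real L * v}"

lemma cnt_bounds:
  assumes "0 \<le> v" "v \<le> 1"
  shows "real L * v - 1 < real (cnt L v) \<and> real (cnt L v) \<le> real L * v"
proof -
  let ?m = "nat \<lfloor>real L * v\<rfloor>"
  have Lv: "0 \<le> real L * v" "real L * v \<le> real L" using assms by (auto simp: mult_left_le)
  have mL: "?m \<le> L" using Lv by (simp add: nat_le_iff floor_le_iff)
  have "{j\<in>{1..L}. real j \<le> real L * v} = {1..?m}"
  proof (rule set_eqI)
    fix j
    have "real j \<le> real L * v \<longleftrightarrow> j \<le> ?m"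
    proof
      assume "real j \<le> real L * v" then show "j \<le> ?m" by (rule le_nat_floor)
    next
      assume "j \<le> ?m"
      then have "real j \<le> real ?m" by simp
      also have "\<dots> = of_int \<lfloor>real L * v\<rfloor>" using Lv by simp
      also have "\<dots> \<le> real L * v" by (rule of_int_floor_le)
      finally show "real j \<le> real L * v" .
    qed
    then show "j \<in> {j\<in>{1..L}. real j \<le> real L * v} \<longleftrightarrow> j \<in> {1..?m}" using mL by auto
  qed
  then have c: "cnt L v = ?m" by (simp add: cnt_def)
  have "real ?m = of_int \<lfloor>real L * v\<rfloor>" using Lv by simp
  then show ?thesis using c by linarith
qed

lemma cnt_neg: "v \<le> 0 \<Longrightarrow> cnt L v = 0"
proof -
  assume "v \<le> 0"
  then have "real L * v \<le> 0" by (simp add: mult_nonneg_nonpos)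
  then have "{j\<in>{1..L}. real j \<le> real L * v} = {}" by auto
  then show ?thesis by (simp add: cnt_def)
qed

definition Dq :: "nat \<Rightarrow> real \<Rightarrow> real" where
  "Dq L v = real (cnt L v) - real (cnt L (- v))"

lemma Dq_bounds:
  assumes "\<bar>v\<bar> \<le> 1"
  shows "\<bar>real L * v - Dq L v\<bar> \<le> 1 \<and> \<bar>Dq L v\<bar> \<le> real L"
proof (cases "0 \<le> v")
  case True
  have "cnt L (- v) = 0" using True by (intro cnt_neg) simp
  moreover have "real L * v \<le> real L * 1" using assms True by (intro mult_left_mono) auto
  ultimately show ?thesis using cnt_bounds[of v L] True assms by (simp add: Dq_def)
next
  case False
  have "cnt L v = 0" using False by (intro cnt_neg) simp
  moreover have "real L * (- v) \<le> real L * 1" using assms False by (intro mult_left_mono) auto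
  ultimately show ?thesis using cnt_bounds[of "- v" L] False assms by (simp add: Dq_def)
qed

lemma prod_approx:
  fixes a b a' b' e :: real
  assumes "\<bar>a\<bar> \<le> 1" "\<bar>b'\<bar> \<le> 1" "\<bar>a - a'\<bar> \<le> e" "\<bar>b - b'\<bar> \<le> e"
  shows "\<bar>a * b - a' * b'\<bar> \<le> 2 * e"
proof -
  have "a * b - a' * b' = a * (b - b') + (a - a') * b'" by (simp add: algebra_simps)
  then have "\<bar>a * b - a' * b'\<bar> \<le> \<bar>a\<bar> * \<bar>b - b'\<bar> + \<bar>a - a'\<bar> * \<bar>b'\<bar>"
    by (simp add: abs_mult[symmetric] abs_triangle_ineq)
  also have "\<dots> \<le> 1 * e + e * 1"
    using assms by (intro add_mono mult_mono) auto
  finally show ?thesis by simp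
qed

definition sgb :: "bool \<Rightarrow> real" where "sgb s = (if s then 1 else -1)"

lemma count_sum: "finite S \<Longrightarrow> (\<Sum>s\<in>S. if P s then 1 else 0) = real (card {s\<in>S. P s})"
  by (simp add: sum.inter_filter[symmetric])

lemma Dq_sum:
  "(\<Sum>p\<in>{1..L} \<times> (UNIV::bool set). sgb (snd p) * (if real (fst p) \<le> real L * (sgb (snd p) * v) then 1 else 0)) = Dq L v"
proof -
  have "(\<Sum>p\<in>{1..L} \<times> (UNIV::bool set). sgb (snd p) * (if real (fst p) \<le> real L * (sgb (snd p) * v) then 1 else 0))
     = (\<Sum>s\<in>{1..L}. \<Sum>\<sigma>\<in>UNIV. sgb \<sigma> * (if real s \<le> real L * (sgb \<sigma> * v) then 1 else 0))"
    by (simp only: sum.cartesian_product) (simp add: case_prod_beta)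
  also have "\<dots> = (\<Sum>s\<in>{1..L}. (if real s \<le> real L * v then 1 else 0)) - (\<Sum>s\<in>{1..L}. (if real s \<le> real L * (- v) then 1 else 0))"
    by (simp add: UNIV_bool sgb_def sum_subtractf)
  also have "\<dots> = Dq L v" by (simp add: count_sum Dq_def cnt_def)
  finally show ?thesis .
qed

lemma disc:
  fixes g :: "bool list \<Rightarrow> bool list \<Rightarrow> real" and n :: nat
  assumes "rep M g" "0 < L"
  shows "\<exists>(J :: (nat \<times> (nat \<times> bool) \<times> (nat \<times> bool)) set) A B sg. finite J \<and> card J \<le> 4 * M * L^2 \<and>
    (\<forall>j\<in>J. A j \<subseteq> {x. length x = n} \<and> B j \<subseteq> {x. length x = n} \<and> (sg j = (1::real) \<or> sg j = -1)) \<and>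
    (\<forall>x y. length x = n \<longrightarrow> length y = n \<longrightarrow>
       \<bar>g x y - (\<Sum>j\<in>J. sg j * (if x \<in> A j then 1 else 0) * (if y \<in> B j then 1 else 0)) / (real L)^2\<bar> \<le> 2 * real M / real L)"
proof -
  obtain k a b where k: "k \<le> M" "\<forall>i<k. \<forall>x. \<bar>a i x\<bar> \<le> 1" "\<forall>i<k. \<forall>y. \<bar>b i y\<bar> \<le> 1"
    "\<And>x y. g x y = (\<Sum>i\<in>{..<k}. a i x * b i y)" using rep_unfold[OF assms(1)] by blast
  define P where "P = {1..L} \<times> (UNIV::bool set)"
  define J where "J = {..<k} \<times> P \<times> P"
  define AA where "AA i p = {x. length x = n \<and> real (fst p) \<le> real L * (sgb (snd p) * a i x)}" for i p
  define BB where "BB i p = {y. length y = n \<and> real (fst p) \<le> real L * (sgb (snd p) * b i y)}" for i p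
  define A :: "nat \<times> (nat \<times> bool) \<times> (nat \<times> bool) \<Rightarrow> bool list set" where "A j = AA (fst j) (fst (snd j))" for j
  define B :: "nat \<times> (nat \<times> bool) \<times> (nat \<times> bool) \<Rightarrow> bool list set" where "B j = BB (fst j) (snd (snd j))" for j
  define sg :: "nat \<times> (nat \<times> bool) \<times> (nat \<times> bool) \<Rightarrow> real" where "sg j = sgb (snd (fst (snd j))) * sgb (snd (snd (snd j)))" for j
  have finP: "finite P" by (simp add: P_def)
  have cP: "card P = 2 * L" by (simp add: P_def card_cartesian_product)
  have finJ: "finite J" using finP by (simp add: J_def)
  have cJ: "card J = 4 * k * L^2" using cP by (simp add: J_def card_cartesian_product power2_eq_square)
  have cJM: "card J \<le> 4 * M * L^2" using cJ k(1) by simp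
  have props: "\<forall>j\<in>J. A j \<subseteq> {x. length x = n} \<and> B j \<subseteq> {x. length x = n} \<and> (sg j = (1::real) \<or> sg j = -1)"
    by (auto simp: A_def B_def AA_def BB_def sg_def sgb_def)
  have main: "\<bar>g x y - (\<Sum>j\<in>J. sg j * (if x \<in> A j then 1 else 0) * (if y \<in> B j then 1 else 0)) / (real L)^2\<bar> \<le> 2 * real M / real L"
    if xy: "length x = n" "length y = n" for x y
  proof -
    have sa: "(\<Sum>p\<in>P. sgb (snd p) * (if x \<in> AA i p then 1 else 0)) = Dq L (a i x)" for i
      using Dq_sum[of L "a i x"] xy by (simp add: P_def AA_def)
    have sb: "(\<Sum>p\<in>P. sgb (snd p) * (if y \<in> BB i p then 1 else 0)) = Dq L (b i y)" for i
      using Dq_sum[of L "b i y"] xy by (simp add: P_def BB_def)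
    have "(\<Sum>j\<in>J. sg j * (if x \<in> A j then 1 else 0) * (if y \<in> B j then 1 else 0))
       = (\<Sum>i\<in>{..<k}. \<Sum>pq\<in>P \<times> P. (sgb (snd (fst pq)) * (if x \<in> AA i (fst pq) then 1 else 0)) *
                                     (sgb (snd (snd pq)) * (if y \<in> BB i (snd pq) then 1 else 0)))"
      unfolding J_def sum.cartesian_product' by (simp add: A_def B_def sg_def mult_ac)
    also have "\<dots> = (\<Sum>i\<in>{..<k}. Dq L (a i x) * Dq L (b i y))"
    proof (intro sum.cong refl)
      fix i
      have "(\<Sum>pq\<in>P \<times> P. (sgb (snd (fst pq)) * (if x \<in> AA i (fst pq) then 1 else 0)) *
                                     (sgb (snd (snd pq)) * (if y \<in> BB i (snd pq) then 1 else 0)))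
        = (\<Sum>p\<in>P. \<Sum>p'\<in>P. (sgb (snd p) * (if x \<in> AA i p then 1 else 0)) *
                                     (sgb (snd p') * (if y \<in> BB i p' then 1 else 0)))"
        by (simp add: sum.cartesian_product')
      also have "\<dots> = (\<Sum>p\<in>P. sgb (snd p) * (if x \<in> AA i p then 1 else 0)) * (\<Sum>p'\<in>P. sgb (snd p') * (if y \<in> BB i p' then 1 else 0))"
        by (simp add: sum_product)
      finally show "(\<Sum>pq\<in>P \<times> P. (sgb (snd (fst pq)) * (if x \<in> AA i (fst pq) then 1 else 0)) *
                                     (sgb (snd (snd pq)) * (if y \<in> BB i (snd pq) then 1 else 0))) = Dq L (a i x) * Dq L (b i y)"
        using sa sb by simp
    qed
    finally have eqS: "(\<Sum>j\<in>J. sg j * (if x \<in> A j then 1 else 0) * (if y \<in> B j then 1 else 0)) / (real L)^2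
        = (\<Sum>i\<in>{..<k}. (Dq L (a i x) / real L) * (Dq L (b i y) / real L))"
      by (simp add: sum_divide_distrib power2_eq_square)
    have Lp: "0 < real L" using assms(2) by simp
    have trm: "\<bar>a i x * b i y - (Dq L (a i x) / real L) * (Dq L (b i y) / real L)\<bar> \<le> 2 * (1 / real L)" if i: "i < k" for i
    proof (rule prod_approx)
      show "\<bar>a i x\<bar> \<le> 1" using k(2) i by blast
      have db: "\<bar>real L * b i y - Dq L (b i y)\<bar> \<le> 1 \<and> \<bar>Dq L (b i y)\<bar> \<le> real L"
        using Dq_bounds k(3) i by blast
      have da: "\<bar>real L * a i x - Dq L (a i x)\<bar> \<le> 1"
        using Dq_bounds k(2) i by blast
      show "\<bar>Dq L (b i y) / real L\<bar> \<le> 1" using db Lp by (simp add: divide_le_eq_1)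
      have "a i x - Dq L (a i x) / real L = (real L * a i x - Dq L (a i x)) / real L" using Lp by (simp add: field_simps)
      then show "\<bar>a i x - Dq L (a i x) / real L\<bar> \<le> 1 / real L" using da Lp by (simp add: divide_right_mono)
      have "b i y - Dq L (b i y) / real L = (real L * b i y - Dq L (b i y)) / real L" using Lp by (simp add: field_simps)
      then show "\<bar>b i y - Dq L (b i y) / real L\<bar> \<le> 1 / real L" using db Lp by (simp add: divide_right_mono)
    qed
    have "\<bar>g x y - (\<Sum>i\<in>{..<k}. (Dq L (a i x) / real L) * (Dq L (b i y) / real L))\<bar>
        = \<bar>\<Sum>i\<in>{..<k}. (a i x * b i y - (Dq L (a i x) / real L) * (Dq L (b i y) / real L))\<bar>"
      by (simp add: k(4) sum_subtractf)
    also have "\<dots> \<le> (\<Sum>i\<in>{..<k}. \<bar>a i x * b i y - (Dq L (a i x) / real L) * (Dq L (b i y) / real L)\<bar>)"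
      by (rule sum_abs)
    also have "\<dots> \<le> (\<Sum>i\<in>{..<k}. 2 * (1 / real L))"
      using trm by (intro sum_mono) auto
    also have "\<dots> = real k * (2 / real L)" by simp
    also have "\<dots> \<le> real M * (2 / real L)" using k(1) Lp by (intro mult_right_mono) auto
    also have "\<dots> = 2 * real M / real L" by simp
    finally show ?thesis by (simp only: eqS)
  qed
  show ?thesis using finJ cJM props main by blast
qed

definition sd :: "'a set \<Rightarrow> 'a \<Rightarrow> 'a set" where "sd B y = (if y \<in> B then B - {y} else insert y B)"

lemma sd_inj: "sd B y = sd B y' \<Longrightarrow> y = y'"
  unfolding sd_def by (auto split: if_splits)

lemma times_inj: "A \<noteq> {} \<Longrightarrow> A \<times> X = A \<times> X' \<Longrightarrow> X = X'"
  by (metis snd_image_times)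

lemma ind_sd: "(if y' \<in> B then 1 else 0) = (if y' \<in> sd B y then 1 else 0) + (if y \<in> B then 1 else -1) * (if y' = y then 1 else (0::real))"
  unfolding sd_def by auto

lemma card_Y: "card {y::bool list. length y = n} = 2 ^ n"
proof -
  have "{y::bool list. length y = n} = {xs. set xs \<subseteq> (UNIV::bool set) \<and> length xs = n}" by auto
  then show ?thesis using card_lists_length_eq[of "UNIV::bool set" n] by simp
qed

lemma finite_Y: "finite {y::bool list. length y = n}"
proof -
  have "{y::bool list. length y = n} = {xs. set xs \<subseteq> (UNIV::bool set) \<and> length xs = n}" by auto
  then show ?thesis using finite_lists_length_eq[of "UNIV::bool set" n] by simp
qed

lemma distinct_rects:
  fixes J :: "'j set" and A B :: "'j \<Rightarrow> bool list set" and sg :: "'j \<Rightarrow> real"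
  assumes "finite J" "4 * card J \<le> 2 ^ n"
    "\<forall>j\<in>J. A j \<subseteq> {x. length x = n} \<and> B j \<subseteq> {x. length x = n} \<and> (sg j = 1 \<or> sg j = -1)"
  shows "\<exists>\<R> w. finite \<R> \<and> card \<R> \<le> 2 * card J \<and> (\<forall>R\<in>\<R>. is_rectangle n R \<and> (w R = (1::real) \<or> w R = -1)) \<and>
    (\<forall>x y. (\<Sum>R\<in>\<R>. w R * (if (x, y) \<in> R then 1 else 0)) =
       (\<Sum>j\<in>J. sg j * (if x \<in> A j then 1 else 0) * (if y \<in> B j then 1 else 0)))"
  using assms
proof (induction J rule: finite_induct)
  case empty
  show ?case by (intro exI[of _ "{}"]) auto
next
  case (insert j J)
  have c4: "4 * card J \<le> 2 ^ n" using insert by simp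
  obtain \<R> w where R: "finite \<R>" "card \<R> \<le> 2 * card J" "\<forall>R\<in>\<R>. is_rectangle n R \<and> (w R = (1::real) \<or> w R = -1)"
    "\<forall>x y. (\<Sum>R\<in>\<R>. w R * (if (x, y) \<in> R then 1 else 0)) =
       (\<Sum>j\<in>J. sg j * (if x \<in> A j then 1 else 0) * (if y \<in> B j then 1 else 0))"
    using insert.IH[OF c4] insert.prems(2) by auto
  have sumJ: "(\<Sum>j\<in>insert j J. sg j * (if x \<in> A j then 1 else 0) * (if y \<in> B j then 1 else 0)) =
      sg j * (if x \<in> A j then 1 else 0) * (if y \<in> B j then 1 else 0) +
      (\<Sum>j\<in>J. sg j * (if x \<in> A j then 1 else 0) * (if y \<in> B j then 1 else 0))" for x y
    using insert.hyps by simp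
  have jp: "A j \<subseteq> {x. length x = n}" "B j \<subseteq> {x. length x = n}" "sg j = 1 \<or> sg j = -1"
    using insert.prems(2) by auto
  show ?case
  proof (cases "A j = {} \<or> B j = {}")
    case True
    then have "sg j * (if x \<in> A j then 1 else 0) * (if y \<in> B j then 1 else 0) = 0" for x y by auto
    moreover have "card \<R> \<le> 2 * card (insert j J)" using R(2) insert.hyps by simp
    ultimately show ?thesis using R sumJ by (intro exI[of _ \<R>] exI[of _ w]) auto
  next
    case False
    let ?Y = "{y::bool list. length y = n}"
    let ?b1 = "{y\<in>?Y. A j \<times> sd (B j) y \<in> \<R>}"
    let ?b2 = "{y\<in>?Y. A j \<times> {y} \<in> \<R>}"
    have "card ?b1 \<le> card \<R>"
    proof (rule card_inj_on_le)
      show "inj_on (\<lambda>y. A j \<times> sd (B j) y) ?b1"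
      proof (rule inj_onI)
        fix u v assume "A j \<times> sd (B j) u = A j \<times> sd (B j) v"
        then have "sd (B j) u = sd (B j) v" using False times_inj by blast
        then show "u = v" by (rule sd_inj)
      qed
    qed (use R(1) in auto)
    moreover have "card ?b2 \<le> card \<R>"
    proof (rule card_inj_on_le)
      show "inj_on (\<lambda>y. A j \<times> {y}) ?b2"
        using False by (auto simp: inj_on_def dest: times_inj)
    qed (use R(1) in auto)
    ultimately have "card (?b1 \<union> ?b2) \<le> 2 * card \<R>" using card_Un_le[of ?b1 ?b2] by simp
    also have "\<dots> < card ?Y" using R(2) insert.prems(1) insert.hyps card_Y[of n] by simp
    finally have "\<not> ?Y \<subseteq> ?b1 \<union> ?b2" using card_mono[OF finite_subset[OF _ finite_Y]] 
      by (metis (no_types, lifting) Un_subset_iff mem_Collect_eq subsetI card_mono finite_Y finite_subset not_le order_refl)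
    then obtain y0 where y0: "length y0 = n" "A j \<times> sd (B j) y0 \<notin> \<R>" "A j \<times> {y0} \<notin> \<R>" by blast
    define R1 where "R1 = A j \<times> sd (B j) y0"
    define R2 where "R2 = A j \<times> {y0}"
    define s where "s = (if y0 \<in> B j then 1 else (-1::real))"
    define w' where "w' = w(R1 := sg j, R2 := s * sg j)"
    have R12: "R1 \<noteq> R2"
    proof
      assume "R1 = R2"
      then have "sd (B j) y0 = {y0}" using False times_inj unfolding R1_def R2_def by blast
      then show False using False unfolding sd_def by (auto split: if_splits)
    qed
    have n1: "R1 \<notin> insert R2 \<R>" using y0 R12 by (simp add: R1_def)
    have n2: "R2 \<notin> \<R>" using y0 by (simp add: R2_def)
    have sdsub: "sd (B j) y0 \<subseteq> {x. length x = n}" using jp y0 by (auto simp: sd_def)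
    have rect: "is_rectangle n R1" "is_rectangle n R2"
      unfolding is_rectangle_def R1_def R2_def using jp sdsub y0 by blast+
    have ww: "w' R = w R" if "R \<in> \<R>" for R using that n1 n2 by (auto simp: w'_def)
    have sum_eq: "(\<Sum>R\<in>insert R1 (insert R2 \<R>). w' R * (if (x, y) \<in> R then 1 else 0)) =
       (\<Sum>j\<in>insert j J. sg j * (if x \<in> A j then 1 else 0) * (if y \<in> B j then 1 else 0))" for x y
    proof -
      have "(\<Sum>R\<in>insert R1 (insert R2 \<R>). w' R * (if (x, y) \<in> R then 1 else 0)) =
          sg j * (if (x, y) \<in> R1 then 1 else 0) + s * sg j * (if (x, y) \<in> R2 then 1 else 0) +
          (\<Sum>R\<in>\<R>. w R * (if (x, y) \<in> R then 1 else 0))"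
        using n1 n2 R(1) R12 ww by (simp add: w'_def)
      also have "sg j * (if (x, y) \<in> R1 then 1 else 0) + s * sg j * (if (x, y) \<in> R2 then 1 else 0) =
          sg j * (if x \<in> A j then 1 else 0) * (if y \<in> B j then 1 else 0)"
        using ind_sd[of y "B j" y0] by (auto simp: R1_def R2_def s_def)
      finally show ?thesis using R(4) sumJ by simp
    qed
    show ?thesis
    proof (intro exI[of _ "insert R1 (insert R2 \<R>)"] exI[of _ w'] conjI)
      show "finite (insert R1 (insert R2 \<R>))" using R(1) by simp
      show "card (insert R1 (insert R2 \<R>)) \<le> 2 * card (insert j J)"
        using R(1,2) insert.hyps card_insert_le[of \<R> R2] card_insert_le[of "insert R2 \<R>" R1]
        by (simp add: card_insert_if)
      show "\<forall>R\<in>insert R1 (insert R2 \<R>). is_rectangle n R \<and> (w' R = 1 \<or> w' R = -1)"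
        using R(3) rect jp ww R12 by (auto simp: w'_def s_def)
      show "\<forall>x y. (\<Sum>R\<in>insert R1 (insert R2 \<R>). w' R * (if (x, y) \<in> R then 1 else 0)) =
         (\<Sum>j\<in>insert j J. sg j * (if x \<in> A j then 1 else 0) * (if y \<in> B j then 1 else 0))"
        using sum_eq by blast
    qed
  qed
qed

lemma card_II: "card (II k) = 2 ^ k"
  using card_Y[of k] by (simp add: II_def)

lemma II_0: "II 0 = {[]}" by (auto simp: II_def)

lemma init_r1:
  assumes "n \<le> ka"
  shows "restr (init_basis n ka x y) {0..<ka} = (\<lambda>i. i < n \<and> x ! i)"
proof (rule ext)
  fix i
  show "restr (init_basis n ka x y) {0..<ka} i = (i < n \<and> x ! i)"
    unfolding restr_def init_basis_def using assms by (cases "i < ka") auto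
qed
lemma init_r2:
  assumes "n \<le> ka" "ka + n \<le> N"
  shows "restr (init_basis n ka x y) ({0..<N} - {0..<ka}) = (\<lambda>i. ka \<le> i \<and> i < ka + n \<and> y ! (i - ka))"
proof (rule ext)
  fix i
  show "restr (init_basis n ka x y) ({0..<N} - {0..<ka}) i = (ka \<le> i \<and> i < ka + n \<and> y ! (i - ka))"
    unfolding restr_def init_basis_def using assms by (cases "i < ka") auto
qed
lemma init_jn: "jn (\<lambda>i. i < n \<and> x ! i) (\<lambda>i. ka \<le> i \<and> i < ka + n \<and> y ! (i - ka)) = init_basis n ka x y"
  unfolding jn_def init_basis_def by (rule ext) simp

lemma init_facts:
  assumes "n \<le> ka" "ka + n \<le> N" "z \<in> local_basis {0..<N}"
  shows "(z = init_basis n ka x y) \<longleftrightarrow>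
     (restr z {0..<ka} = (\<lambda>i. i < n \<and> x ! i) \<and> restr z ({0..<N} - {0..<ka}) = (\<lambda>i. ka \<le> i \<and> i < ka + n \<and> y ! (i - ka)))"
proof
  assume "z = init_basis n ka x y"
  then show "restr z {0..<ka} = (\<lambda>i. i < n \<and> x ! i) \<and> restr z ({0..<N} - {0..<ka}) = (\<lambda>i. ka \<le> i \<and> i < ka + n \<and> y ! (i - ka))"
    using init_r1[OF assms(1)] init_r2[OF assms(1,2)] by simp
next
  assume h: "restr z {0..<ka} = (\<lambda>i. i < n \<and> x ! i) \<and> restr z ({0..<N} - {0..<ka}) = (\<lambda>i. ka \<le> i \<and> i < ka + n \<and> y ! (i - ka))"
  have un: "{0..<ka} \<union> ({0..<N} - {0..<ka}) = {0..<N}" using assms(1,2) by auto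
  have "z = jn (restr z {0..<ka}) (restr z ({0..<N} - {0..<ka}))"
    using jn_restr[of z "{0..<ka}" "{0..<N} - {0..<ka}"] assms(3) un by simp
  also have "\<dots> = init_basis n ka x y"
    using h init_jn by simp
  finally show "z = init_basis n ka x y" .
qed

lemma init_in: "n \<le> ka \<Longrightarrow> ka + n \<le> N \<Longrightarrow> init_basis n ka x y \<in> local_basis {0..<N}"
  by (auto simp: init_basis_def local_basis_def)

lemma quantum_rep:
  assumes qp: "qprotocol n N ka rs q"
  shows "rep (2 * 2 ^ length rs * 2 ^ length rs) (\<lambda>x y. prob_one n N ka rs q x y) \<and>
     (\<forall>x y. 0 \<le> prob_one n N ka rs q x y \<and> prob_one n N ka rs q x y \<le> 1)"
proof -
  let ?\<Omega> = "{0..<N} :: nat set"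
  let ?O = "{0..<ka} :: nat set"
  let ?c = "length rs"
  have p: "n \<le> ka" "ka + n \<le> N" "q < N" "valid_rounds N ?O rs" using qp by (auto simp: qprotocol_def)
  have Osub: "?O \<subseteq> ?\<Omega>" using p by auto
  define ax where "ax x = (\<lambda>i. i < n \<and> x ! i)" for x :: "bool list"
  define bx where "bx y = (\<lambda>i. ka \<le> i \<and> i < ka + n \<and> y ! (i - ka))" for y :: "bool list"
  define a0 where "a0 x (m::bool list) u = (if u = ax x then 1 else (0::complex))" for x m u
  define b0 where "b0 y (m::bool list) u = (if u = bx y then 1 else (0::complex))" for y m u
  define \<psi>0 where "\<psi>0 x y = init_state n ka x y" for x y
  have axin: "ax x \<in> local_basis ?O" for x using p by (auto simp: ax_def local_basis_def)
  have bxin: "bx y \<in> local_basis (?\<Omega> - ?O)" for y using p by (auto simp: bx_def local_basis_def)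
  have finO: "finite (local_basis ?O)" by (simp add: finite_lb)
  have finO2: "finite (local_basis (?\<Omega> - ?O))" by (simp add: finite_lb)
  have na: "\<forall>x m. m \<in> II 0 \<longrightarrow> nrm ?O (a0 x m) \<le> 1"
  proof (intro allI impI)
    fix x m
    have "nrm ?O (a0 x m) = (\<Sum>u\<in>local_basis ?O. if u = ax x then 1 else 0)"
      unfolding nrm_def a0_def by (intro sum.cong refl) auto
    also have "\<dots> = 1" using axin[of x] finO by simp
    finally show "nrm ?O (a0 x m) \<le> 1" by simp
  qed
  have nb: "\<forall>y m. m \<in> II 0 \<longrightarrow> nrm (?\<Omega> - ?O) (b0 y m) \<le> 1"
  proof (intro allI impI)
    fix y m
    have "nrm (?\<Omega> - ?O) (b0 y m) = (\<Sum>u\<in>local_basis (?\<Omega> - ?O). if u = bx y then 1 else 0)"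
      unfolding nrm_def b0_def by (intro sum.cong refl) auto
    also have "\<dots> = 1" using bxin[of y] finO2 by simp
    finally show "nrm (?\<Omega> - ?O) (b0 y m) \<le> 1" by simp
  qed
  have r0: "\<forall>x y. \<forall>z\<in>local_basis ?\<Omega>. \<psi>0 x y z = (\<Sum>m\<in>II 0. a0 x m (restr z ?O) * b0 y m (restr z (?\<Omega> - ?O)))"
  proof (intro allI ballI)
    fix x y z assume z: "z \<in> local_basis ?\<Omega>"
    show "\<psi>0 x y z = (\<Sum>m\<in>II 0. a0 x m (restr z ?O) * b0 y m (restr z (?\<Omega> - ?O)))"
      unfolding II_0 \<psi>0_def init_state_def a0_def b0_def ax_def bx_def init_facts[OF p(1,2) z] by simp
  qed
  obtain O' a' b' where O': "O' \<subseteq> ?\<Omega>"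
    "\<forall>x m. m \<in> II (0 + ?c) \<longrightarrow> nrm O' (a' x m) \<le> 1"
    "\<forall>y m. m \<in> II (0 + ?c) \<longrightarrow> nrm (?\<Omega> - O') (b' y m) \<le> 1"
    "\<forall>x y. \<forall>z\<in>local_basis ?\<Omega>. run N ?O rs (\<psi>0 x y) z =
        (\<Sum>m\<in>II (0 + ?c). a' x m (restr z O') * b' y m (restr z (?\<Omega> - O')))"
    using run_rep[OF p(4) Osub na nb r0] by blast
  define h1 where "h1 = (\<lambda>u. if q \<in> O' then (if u q then 1 else 0) else (1::complex))"
  define h2 where "h2 = (\<lambda>v. if q \<in> O' then 1 else (if v q then 1 else (0::complex)))"
  define AA where "AA x m m' = (\<Sum>u\<in>local_basis O'. h1 u * (a' x m u * cnj (a' x m' u)))" for x m m'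
  define BB where "BB y m m' = (\<Sum>v\<in>local_basis (?\<Omega> - O'). h2 v * (b' y m v * cnj (b' y m' v)))" for y m m'
  have Pe: "prob_one n N ka rs q x y = Re (\<Sum>m\<in>II ?c. \<Sum>m'\<in>II ?c. AA x m m' * BB y m m')" for x y
    unfolding prob_one_def AA_def BB_def h1_def h2_def \<psi>0_def[symmetric]
    by (rule prob_rep[OF O'(1) finite_II]) (use O'(4) in simp)
  have finO': "finite O'" using O'(1) finite_subset by blast
  have AAb: "cmod (AA x m m') \<le> 1" if "m \<in> II ?c" "m' \<in> II ?c" for x m m'
    unfolding AA_def using O'(2) that finO' by (intro inner_bound) (auto simp: h1_def)
  have BBb: "cmod (BB y m m') \<le> 1" if "m \<in> II ?c" "m' \<in> II ?c" for y m m'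
    unfolding BB_def using O'(3) that by (intro inner_bound) (auto simp: h2_def)
  define T where "T = II ?c \<times> II ?c \<times> (UNIV :: bool set)"
  define fa where "fa t x = (if snd (snd t) then Re (AA x (fst t) (fst (snd t))) else Im (AA x (fst t) (fst (snd t))))" for t x
  define fb where "fb t y = (if snd (snd t) then Re (BB y (fst t) (fst (snd t))) else - Im (BB y (fst t) (fst (snd t))))" for t y
  have Pe2: "prob_one n N ka rs q x y = (\<Sum>t\<in>T. fa t x * fb t y)" for x y
    unfolding Pe T_def sum.cartesian_product' by (simp add: Re_sum UNIV_bool fa_def fb_def)
  have cT: "card T = 2 * 2 ^ ?c * 2 ^ ?c" by (simp add: T_def card_cartesian_product card_II)
  have "rep (2 * 2 ^ ?c * 2 ^ ?c) (\<lambda>x y. \<Sum>t\<in>T. fa t x * fb t y)"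
  proof (rule rep_of_sum)
    show "finite T" by (simp add: T_def finite_II)
    show "card T \<le> 2 * 2 ^ ?c * 2 ^ ?c" using cT by simp
    show "\<forall>i\<in>T. \<forall>x. \<bar>fa i x\<bar> \<le> 1"
    proof (intro ballI allI)
      fix t x assume "t \<in> T"
      then have b: "cmod (AA x (fst t) (fst (snd t))) \<le> 1" using AAb by (auto simp: T_def)
      show "\<bar>fa t x\<bar> \<le> 1" unfolding fa_def
        using abs_Re_le_cmod[of "AA x (fst t) (fst (snd t))"] abs_Im_le_cmod[of "AA x (fst t) (fst (snd t))"] b
        by auto
    qed
    show "\<forall>i\<in>T. \<forall>y. \<bar>fb i y\<bar> \<le> 1"
    proof (intro ballI allI)
      fix t y assume "t \<in> T"
      then have b: "cmod (BB y (fst t) (fst (snd t))) \<le> 1" using BBb by (auto simp: T_def)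
      show "\<bar>fb t y\<bar> \<le> 1" unfolding fb_def
        using abs_Re_le_cmod[of "BB y (fst t) (fst (snd t))"] abs_Im_le_cmod[of "BB y (fst t) (fst (snd t))"] b
        by auto
    qed
  qed
  then have R: "rep (2 * 2 ^ ?c * 2 ^ ?c) (\<lambda>x y. prob_one n N ka rs q x y)" using Pe2 by simp
  have nrm1: "nrm ?\<Omega> (run N ?O rs (init_state n ka x y)) = 1" for x y
  proof -
    have "nrm ?\<Omega> (run N ?O rs (init_state n ka x y)) = nrm ?\<Omega> (init_state n ka x y)"
      by (rule run_norm[OF p(4) Osub])
    also have "\<dots> = (\<Sum>u\<in>local_basis ?\<Omega>. if u = init_basis n ka x y then 1 else 0)"
      unfolding nrm_def init_state_def by (intro sum.cong refl) auto
    also have "\<dots> = 1" using init_in[OF p(1,2)] by (simp add: finite_lb)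
    finally show ?thesis .
  qed
  have bnd: "0 \<le> prob_one n N ka rs q x y \<and> prob_one n N ka rs q x y \<le> 1" for x y
  proof
    show "0 \<le> prob_one n N ka rs q x y" unfolding prob_one_def by (intro sum_nonneg) auto
    have "prob_one n N ka rs q x y \<le> nrm ?\<Omega> (run N ?O rs (init_state n ka x y))"
      unfolding prob_one_def nrm_def by (intro sum_mono) auto
    then show "prob_one n N ka rs q x y \<le> 1" using nrm1 by simp
  qed
  show ?thesis using R bnd by blast
qed

definition good :: "nat \<Rightarrow> (bool list \<Rightarrow> bool list \<Rightarrow> bool) \<Rightarrow> nat \<Rightarrow> real \<Rightarrow> (bool list \<times> bool list) set set \<Rightarrow> ((bool list \<times> bool list) set \<Rightarrow> real) \<Rightarrow> bool" where
  "good n f d \<alpha> \<R> w \<longleftrightarrow> 0 \<le> \<alpha> \<and> \<alpha> \<le> 1 \<and> finite \<R> \<and>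
     (\<forall>R\<in>\<R>. is_rectangle n R \<and> (w R = \<alpha> \<or> w R = - \<alpha>)) \<and>
     (\<forall>x y. length x = n \<longrightarrow> length y = n \<longrightarrow>
        (let s = (\<Sum>R\<in>\<R>. w R * (if (x, y) \<in> R then 1 else 0)) in
         (if f x y then 1 - 2 powr (- real d) \<le> s \<and> s \<le> 1
          else 0 \<le> s \<and> s \<le> 2 powr (- real d))))"

lemma exact_rep:
  "\<exists>\<R> w. good n f d 1 \<R> w \<and> card \<R> \<le> 4 ^ n"
proof -
  let ?Y = "{y::bool list. length y = n}"
  let ?S = "{p \<in> ?Y \<times> ?Y. f (fst p) (snd p)}"
  define g where "g p = {fst p} \<times> {snd p}" for p :: "bool list \<times> bool list"
  have inj: "inj_on g ?S" by (auto simp: inj_on_def g_def)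
  have finS: "finite ?S" using finite_Y by simp
  have cS: "card (g ` ?S) \<le> 4 ^ n"
  proof -
    have "card (g ` ?S) = card ?S" by (rule card_image[OF inj])
    also have "\<dots> \<le> card (?Y \<times> ?Y)" using finite_Y by (intro card_mono) auto
    also have "\<dots> = 4 ^ n" by (simp add: card_cartesian_product card_Y power_mult_distrib[symmetric])
    finally show ?thesis .
  qed
  have sum: "(\<Sum>R\<in>g ` ?S. 1 * (if (x, y) \<in> R then 1 else 0)) = (if f x y then 1 else (0::real))"
    if "length x = n" "length y = n" for x y
  proof -
    have "(\<Sum>R\<in>g ` ?S. 1 * (if (x, y) \<in> R then 1 else 0)) = (\<Sum>p\<in>?S. (if (x, y) \<in> g p then 1 else (0::real)))"
      by (simp add: sum.reindex[OF inj])
    also have "\<dots> = (\<Sum>p\<in>?S. (if p = (x, y) then 1 else (0::real)))"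
      by (intro sum.cong refl) (auto simp: g_def)
    also have "\<dots> = (if f x y then 1 else 0)" using finS that by (simp add: sum.delta)
    finally show ?thesis .
  qed
  have pw: "0 \<le> 2 powr (- real d)" by simp
  have "good n f d 1 (g ` ?S) (\<lambda>R. 1)"
    unfolding good_def Let_def
  proof (intro conjI allI impI)
    show "finite (g ` ?S)" using finS by simp
    show "\<forall>R\<in>g ` ?S. is_rectangle n R \<and> (1 = (1::real) \<or> 1 = - (1::real))"
    proof
      fix R assume "R \<in> g ` ?S"
      then obtain a b where ab: "length a = n" "length b = n" "R = {a} \<times> {b}" by (auto simp: g_def)
      then have "is_rectangle n R" unfolding is_rectangle_def by (intro exI[of _ "{a}"] exI[of _ "{b}"]) auto
      then show "is_rectangle n R \<and> (1 = (1::real) \<or> 1 = - (1::real))" by simp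
    qed
    fix x y :: "bool list" assume xy: "length x = n" "length y = n"
    show "if f x y then 1 - 2 powr (- real d) \<le> (\<Sum>R\<in>g ` ?S. (1::real) * (if (x, y) \<in> R then 1 else 0)) \<and> (\<Sum>R\<in>g ` ?S. (1::real) * (if (x, y) \<in> R then 1 else 0)) \<le> 1
      else 0 \<le> (\<Sum>R\<in>g ` ?S. (1::real) * (if (x, y) \<in> R then 1 else 0)) \<and> (\<Sum>R\<in>g ` ?S. (1::real) * (if (x, y) \<in> R then 1 else 0)) \<le> 2 powr (- real d)"
      unfolding sum[OF xy] using pw by simp
  qed auto
  then show ?thesis using cS by blast
qed

lemma mul_pow2: "(a::nat) \<le> 2 ^ p \<Longrightarrow> b \<le> 2 ^ q \<Longrightarrow> a * b \<le> 2 ^ (p + q)"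
  by (metis mult_le_mono power_add)

lemma pow2_mono: "(a::nat) \<le> 2 ^ p \<Longrightarrow> p \<le> q \<Longrightarrow> a \<le> 2 ^ q"
  by (meson le_trans one_le_numeral power_increasing)

lemma num_bound:
  fixes c d :: nat assumes c: "1 \<le> c" and d: "1 \<le> d"
  shows "(16::nat) * (4 * (1 + 2 ^ (2 * (6 * (d + 2))) * Suc (2 * 2 ^ c * 2 ^ c) ^ (2 * (6 * (d + 2)))) *
      (2 * (1 + 2 ^ (2 * (6 * (d + 2))) * Suc (2 * 2 ^ c * 2 ^ c) ^ (2 * (6 * (d + 2)))) * 2 ^ (d + 2))^2)^2
      \<le> 2 ^ (1200 * d * c)"
proof -
  define D :: nat where "D = 2 * (6 * (d + 2))"
  define M0 :: nat where "M0 = 2 * 2 ^ c * 2 ^ c"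
  define M :: nat where "M = 1 + 2 ^ D * Suc M0 ^ D"
  define L :: nat where "L = 2 * M * 2 ^ (d + 2)"
  define e :: nat where "e = d * c"
  have e1: "d \<le> e" "c \<le> e" "1 \<le> e" using c d by (auto simp: e_def)
  have M0e: "M0 = 2 ^ (2 * c + 1)"
  proof -
    have "(2::nat) ^ (2 * c + 1) = 2 * (2 ^ c * 2 ^ c)" by (simp add: power_add[symmetric] mult_2)
    then show ?thesis by (simp add: M0_def)
  qed
  have s1: "Suc M0 \<le> 2 ^ (4 * c)"
  proof -
    have "Suc M0 \<le> 2 * M0" using M0e by simp
    also have "\<dots> = 2 ^ (2 * c + 2)" using M0e by simp
    also have "\<dots> \<le> 2 ^ (4 * c)" using c by (intro power_increasing) auto
    finally show ?thesis .
  qed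
  have s2: "Suc M0 ^ D \<le> 2 ^ (4 * c * D)"
    using power_mono[OF s1, of D] by (simp add: power_mult)
  have s3: "2 ^ D * Suc M0 ^ D \<le> 2 ^ (D + 4 * c * D)" by (rule mul_pow2[OF order_refl s2])
  have X1: "1 \<le> 2 ^ D * Suc M0 ^ D" by simp
  have s4: "M \<le> 2 ^ (D + 4 * c * D + 1)"
  proof -
    have "M \<le> 2 * (2 ^ D * Suc M0 ^ D)" using X1 by (simp add: M_def)
    also have "\<dots> \<le> 2 * 2 ^ (D + 4 * c * D)" using s3 by simp
    finally show ?thesis by simp
  qed
  have ex: "D + 4 * c * D + 1 = 48 * e + 12 * d + 96 * c + 25" by (simp add: D_def e_def algebra_simps)
  have "D + 4 * c * D + 1 \<le> 181 * e" using ex e1 by linarith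
  then have Mb: "M \<le> 2 ^ (181 * e)" by (rule pow2_mono[OF s4])
  have Lb: "L \<le> 2 ^ (185 * e)"
  proof -
    have "L = 2 * M * 2 ^ (d + 2)" by (simp add: L_def)
    also have "\<dots> \<le> 2 ^ (1 + 181 * e + (d + 2))"
    proof -
      have "2 * M \<le> 2 ^ (1 + 181 * e)" by (rule mul_pow2[OF _ Mb]) simp
      then show ?thesis by (rule mul_pow2) simp
    qed
    also have "\<dots> \<le> 2 ^ (185 * e)" using e1 by (intro power_increasing) auto
    finally show ?thesis .
  qed
  have L2: "L ^ 2 \<le> 2 ^ (370 * e)" using power_mono[OF Lb, of 2] by (simp add: power_mult[symmetric] mult.commute)
  have "4 * M \<le> 2 ^ (2 + 181 * e)" by (rule mul_pow2[OF _ Mb]) simp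
  then have T: "4 * M * L ^ 2 \<le> 2 ^ (2 + 181 * e + 370 * e)" by (rule mul_pow2[OF _ L2])
  have T2: "(4 * M * L ^ 2) ^ 2 \<le> 2 ^ (2 * (2 + 181 * e + 370 * e))"
    using power_mono[OF T, of 2] by (simp add: power_mult[symmetric] mult.commute)
  have "16 * (4 * M * L ^ 2) ^ 2 \<le> 2 ^ (4 + 2 * (2 + 181 * e + 370 * e))"
    by (intro mul_pow2 T2) simp
  also have "\<dots> \<le> 2 ^ (1200 * d * c)"
  proof (rule power_increasing)
    have ee: "1200 * d * c = 1200 * e" by (simp add: e_def)
    have "4 + 2 * (2 + 181 * e + 370 * e) \<le> 1200 * e" using e1(3) by simp
    then show "4 + 2 * (2 + 181 * e + 370 * e) \<le> 1200 * d * c" unfolding ee .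
  qed simp
  finally show ?thesis by (simp add: M_def L_def D_def M0_def)
qed


lemma approx_case:
  assumes d: "1 \<le> d" and c: "1 \<le> c" and qp: "qprotocol n N ka rs q" and lc: "length rs = c"
    and comp: "computes_13 n N ka rs q f"
  shows "\<exists>\<alpha> \<R> w. good n f d \<alpha> \<R> w \<and> card \<R> \<le> 2 ^ (1200 * d * c)"
proof -
  define P where "P = prob_one n N ka rs q"
  define M0 :: nat where "M0 = 2 * 2 ^ c * 2 ^ c"
  define h :: nat where "h = 6 * (d + 2)"
  define D :: nat where "D = 2 * h"
  define \<epsilon> :: real where "\<epsilon> = 1 / 2 ^ (d + 2)"
  define Mr :: nat where "Mr = 1 + 2 ^ D * Suc M0 ^ D"
  define L :: nat where "L = 2 * Mr * 2 ^ (d + 2)"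
  have qr: "rep M0 P" "\<forall>x y. 0 \<le> P x y \<and> P x y \<le> 1"
    using quantum_rep[OF qp] lc by (simp_all add: P_def M0_def)
  have epos: "0 < \<epsilon>" by (simp add: \<epsilon>_def)
  have e8: "\<epsilon> \<le> 1/8"
  proof -
    have "(8::real) \<le> 2 ^ (d + 2)" using d power_increasing[of 3 "d+2" "2::real"] by simp
    then show ?thesis unfolding \<epsilon>_def by (simp add: divide_simps)
  qed
  have e4: "4 * \<epsilon> = 2 powr (- real d)"
    by (simp add: \<epsilon>_def powr_minus powr_realpow power_add divide_simps)
  have ampe: "(8/9::real) ^ h \<le> \<epsilon>"
  proof -
    have "(8/9::real) ^ h = ((8/9) ^ 6) ^ (d + 2)" unfolding h_def by (rule power_mult)
    also have "\<dots> \<le> (1/2) ^ (d + 2)" by (intro power_mono) (simp_all add: power_divide)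
    also have "\<dots> = \<epsilon>" by (simp add: \<epsilon>_def power_divide)
    finally show ?thesis .
  qed
  define r where "r x y = 2 * \<epsilon> * 1 + (1 - 4 * \<epsilon>) * amp D (P x y)" for x y
  have rr: "rep Mr r"
  proof -
    have "rep (1 + 2 ^ D * Suc M0 ^ D) (\<lambda>x y. 2 * \<epsilon> * 1 + (1 - 4 * \<epsilon>) * amp D (P x y))"
      using epos e8 by (intro rep_add rep_scale rep_one rep_amp qr(1)) auto
    then show ?thesis by (simp add: r_def[abs_def] Mr_def)
  qed
  have Mr1: "1 \<le> Mr" by (simp add: Mr_def)
  have Lpos: "0 < L" using Mr1 by (simp add: L_def)
  obtain J :: "(nat \<times> (nat \<times> bool) \<times> (nat \<times> bool)) set" and A B sg where
    J: "finite J" "card J \<le> 4 * Mr * L^2"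
    "\<forall>j\<in>J. A j \<subseteq> {x. length x = n} \<and> B j \<subseteq> {x. length x = n} \<and> (sg j = (1::real) \<or> sg j = -1)"
    "\<forall>x y. length x = n \<longrightarrow> length y = n \<longrightarrow>
       \<bar>r x y - (\<Sum>j\<in>J. sg j * (if x \<in> A j then 1 else 0) * (if y \<in> B j then 1 else 0)) / (real L)^2\<bar> \<le> 2 * real Mr / real L"
    using disc[OF rr Lpos, of n] by blast
  have err: "2 * real Mr / real L = \<epsilon>" using Mr1 by (simp add: L_def \<epsilon>_def)
  define sJ where "sJ x y = (\<Sum>j\<in>J. sg j * (if x \<in> A j then 1 else 0) * (if y \<in> B j then 1 else 0)) / (real L)^2" for x y
  have key: "if f x y then 1 - 2 powr (- real d) \<le> sJ x y \<and> sJ x y \<le> 1 else 0 \<le> sJ x y \<and> sJ x y \<le> 2 powr (- real d)"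
    if xy: "length x = n" "length y = n" for x y
  proof -
    have close: "\<bar>r x y - sJ x y\<bar> \<le> \<epsilon>" using J(4) xy err by (simp add: sJ_def)
    have Pb: "0 \<le> P x y" "P x y \<le> 1" using qr(2) by auto
    have f4: "0 \<le> 1 - 4 * \<epsilon>" using e8 by simp
    have c13: "if f x y then 2/3 \<le> P x y else P x y \<le> 1/3" using comp xy unfolding computes_13_def P_def by blast
    show ?thesis
    proof (cases "f x y")
      case True
      then have "2/3 \<le> P x y" using c13 by simp
      then have ab: "1 - (8/9) ^ h \<le> amp D (P x y) \<and> amp D (P x y) \<le> 1"
        using amp_high Pb unfolding D_def by blast
      then have ab2: "1 - \<epsilon> \<le> amp D (P x y)" using ampe by linarith
      have lo: "(1 - 4 * \<epsilon>) * (1 - \<epsilon>) \<le> (1 - 4 * \<epsilon>) * amp D (P x y)"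
        by (rule mult_left_mono[OF ab2 f4])
      have hi: "(1 - 4 * \<epsilon>) * amp D (P x y) \<le> (1 - 4 * \<epsilon>) * 1"
        using ab f4 by (intro mult_left_mono) auto
      have q: "(1 - 4 * \<epsilon>) * (1 - \<epsilon>) = 1 - 5 * \<epsilon> + 4 * (\<epsilon> * \<epsilon>)" by (simp add: algebra_simps)
      have q2: "0 \<le> \<epsilon> * \<epsilon>" by simp
      have rl0: "1 - 5 * \<epsilon> \<le> (1 - 4 * \<epsilon>) * amp D (P x y)" using lo q q2 by linarith
      have rl: "1 - 3 * \<epsilon> \<le> r x y" using rl0 by (simp add: r_def)
      have rh: "r x y \<le> 1 - 2 * \<epsilon>" using hi by (simp add: r_def)
      show ?thesis using True rl rh close e4 by (simp add: abs_le_iff; linarith)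
    next
      case False
      then have "P x y \<le> 1/3" using c13 by simp
      then have ab: "0 \<le> amp D (P x y) \<and> amp D (P x y) \<le> (8/9) ^ h"
        using amp_low Pb unfolding D_def by blast
      then have ab2: "amp D (P x y) \<le> \<epsilon>" using ampe by linarith
      have lo: "0 \<le> (1 - 4 * \<epsilon>) * amp D (P x y)" using ab f4 by simp
      have hi: "(1 - 4 * \<epsilon>) * amp D (P x y) \<le> 1 * \<epsilon>"
        using ab ab2 f4 epos by (intro mult_mono) auto
      have rl: "2 * \<epsilon> \<le> r x y" using lo by (simp add: r_def)
      have rh: "r x y \<le> 3 * \<epsilon>" using hi by (simp add: r_def)
      show ?thesis using False rl rh close e4 by (simp add: abs_le_iff; linarith)
    qed
  qed
  have nb: "16 * (4 * Mr * L ^ 2) ^ 2 \<le> 2 ^ (1200 * d * c)"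
    using num_bound[OF c d] by (simp add: Mr_def L_def D_def h_def M0_def)
  have X1: "1 \<le> 4 * Mr * L ^ 2" using Mr1 Lpos by simp
  show ?thesis
  proof (cases "4 * card J \<le> 2 ^ n")
    case True
    obtain \<R> w0 where R: "finite \<R>" "card \<R> \<le> 2 * card J"
      "\<forall>R\<in>\<R>. is_rectangle n R \<and> (w0 R = (1::real) \<or> w0 R = -1)"
      "\<forall>x y. (\<Sum>R\<in>\<R>. w0 R * (if (x, y) \<in> R then 1 else 0)) =
         (\<Sum>j\<in>J. sg j * (if x \<in> A j then 1 else 0) * (if y \<in> B j then 1 else 0))"
      using distinct_rects[OF J(1) True J(3)] by blast
    define \<alpha> :: real where "\<alpha> = 1 / (real L)^2"
    define w where "w R = \<alpha> * w0 R" for R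
    have a01: "0 \<le> \<alpha>" "\<alpha> \<le> 1" using Lpos by (auto simp: \<alpha>_def divide_simps)
    have sumw: "(\<Sum>R\<in>\<R>. w R * (if (x, y) \<in> R then 1 else 0)) = sJ x y" for x y
    proof -
      have "(\<Sum>R\<in>\<R>. w R * (if (x, y) \<in> R then 1 else 0)) = \<alpha> * (\<Sum>R\<in>\<R>. w0 R * (if (x, y) \<in> R then 1 else 0))"
        by (simp add: w_def sum_distrib_left mult.assoc)
      then show ?thesis using R(4) by (simp add: sJ_def \<alpha>_def)
    qed
    have g: "good n f d \<alpha> \<R> w"
      unfolding good_def Let_def sumw using a01 R(1) R(3) key by (auto simp: w_def)
    have "card \<R> \<le> 2 * (4 * Mr * L ^ 2)" using R(2) J(2) by simp
    also have "\<dots> \<le> 16 * (4 * Mr * L ^ 2) ^ 2" using X1 by (simp add: power2_eq_square)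
    also have "\<dots> \<le> 2 ^ (1200 * d * c)" by (rule nb)
    finally show ?thesis using g by blast
  next
    case False
    obtain \<R> w where R: "good n f d 1 \<R> w" "card \<R> \<le> 4 ^ n" using exact_rep by blast
    have a1: "(2::nat) ^ n \<le> 4 * card J" using False by simp
    have a2: "4 * card J \<le> 4 * (4 * Mr * L ^ 2)" using J(2) by simp
    from le_trans[OF a1 a2] have "(2::nat) ^ n \<le> 4 * (4 * Mr * L ^ 2)" .
    then have "(2::nat) ^ n * 2 ^ n \<le> (4 * (4 * Mr * L ^ 2)) * (4 * (4 * Mr * L ^ 2))" using mult_le_mono by blast
    then have "card \<R> \<le> 16 * (4 * Mr * L ^ 2) ^ 2"
      using R(2) by (simp add: power2_eq_square power_mult_distrib[symmetric] algebra_simps)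
    then show ?thesis using R(1) nb by (meson le_trans)
  qed
qed


lemma zero_case:
  assumes qp: "qprotocol n N ka rs q" and rs: "rs = []" and comp: "computes_13 n N ka rs q f"
  shows "\<exists>\<alpha> \<R> w. good n f d \<alpha> \<R> w \<and> card \<R> \<le> 1"
proof -
  have p: "n \<le> ka" "ka + n \<le> N" using qp by (auto simp: qprotocol_def)
  have P: "prob_one n N ka rs q x y = (if init_basis n ka x y q then 1 else 0)" for x y
  proof -
    have "prob_one n N ka rs q x y = (\<Sum>z\<in>local_basis {0..<N}. if z = init_basis n ka x y then (if init_basis n ka x y q then 1 else 0) else 0)"
      unfolding prob_one_def rs init_state_def by (intro sum.cong refl) auto
    also have "\<dots> = (if init_basis n ka x y q then 1 else 0)"
      using init_in[OF p] by (simp add: finite_lb)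
    finally show ?thesis .
  qed
  define A0 where "A0 = {x::bool list. length x = n \<and> (q < n \<longrightarrow> x ! q)}"
  define B0 where "B0 = {y::bool list. length y = n \<and> (\<not> q < n \<longrightarrow> (ka \<le> q \<and> q < ka + n \<and> y ! (q - ka)))}"
  have fe: "f x y = ((x, y) \<in> A0 \<times> B0)" if xy: "length x = n" "length y = n" for x y
  proof -
    have c13: "if f x y then 2/3 \<le> prob_one n N ka rs q x y else prob_one n N ka rs q x y \<le> 1/3"
      using comp xy unfolding computes_13_def by blast
    have Pv: "prob_one n N ka rs q x y = (if init_basis n ka x y q then 1 else 0)" by (rule P)
    have "f x y = init_basis n ka x y q"
    proof (cases "f x y")
      case True
      then have "2/3 \<le> prob_one n N ka rs q x y" using c13 by simp
      then show ?thesis using True by (cases "init_basis n ka x y q") (simp_all add: Pv)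
    next
      case False
      then have "prob_one n N ka rs q x y \<le> 1/3" using c13 by simp
      then show ?thesis using False by (cases "init_basis n ka x y q") (simp_all add: Pv)
    qed
    also have "\<dots> = ((x, y) \<in> A0 \<times> B0)"
    proof (cases "q < n")
      case True
      then have "\<not> ka \<le> q" using p by simp
      then show ?thesis using True xy by (simp add: init_basis_def A0_def B0_def)
    next
      case False
      then show ?thesis using xy by (simp add: init_basis_def A0_def B0_def)
    qed
    finally show ?thesis .
  qed
  have rect: "is_rectangle n (A0 \<times> B0)" unfolding is_rectangle_def
    by (intro exI[of _ A0] exI[of _ B0]) (auto simp: A0_def B0_def)
  have pw: "0 \<le> 2 powr (- real d)" by simp
  have "good n f d 1 {A0 \<times> B0} (\<lambda>R. 1)"
    unfolding good_def Let_def
  proof (intro conjI allI impI)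
    fix x y :: "bool list" assume xy: "length x = n" "length y = n"
    show "if f x y then 1 - 2 powr - real d \<le> (\<Sum>R\<in>{A0 \<times> B0}. (1::real) * (if (x, y) \<in> R then 1 else 0)) \<and> (\<Sum>R\<in>{A0 \<times> B0}. (1::real) * (if (x, y) \<in> R then 1 else 0)) \<le> 1
        else 0 \<le> (\<Sum>R\<in>{A0 \<times> B0}. (1::real) * (if (x, y) \<in> R then 1 else 0)) \<and> (\<Sum>R\<in>{A0 \<times> B0}. (1::real) * (if (x, y) \<in> R then 1 else 0)) \<le> 2 powr - real d"
      using fe[OF xy] pw by simp
  qed (use rect in simp_all)
  then show ?thesis by (intro exI[of _ 1] exI[of _ "{A0 \<times> B0}"] exI[of _ "\<lambda>R. 1"]) simp
qed


theorem lemma3p3: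
  "\<exists>K::real. K > 0 \<and>
    (\<forall>(n::nat) (f::bool list \<Rightarrow> bool list \<Rightarrow> bool) (d::nat) (c::nat) N ka rs q.
      d \<ge> 1 \<longrightarrow> qprotocol n N ka rs q \<longrightarrow> length rs = c \<longrightarrow> computes_13 n N ka rs q f \<longrightarrow>
      (\<exists>(\<alpha>::real) (\<R>::(bool list \<times> bool list) set set) (w::(bool list \<times> bool list) set \<Rightarrow> real).
         0 \<le> \<alpha> \<and> \<alpha> \<le> 1 \<and> finite \<R> \<and> real (card \<R>) \<le> 2 powr (K * real d * real c) \<and>
         (\<forall>R\<in>\<R>. is_rectangle n R \<and> (w R = \<alpha> \<or> w R = - \<alpha>)) \<and>
         (\<forall>x y. length x = n \<longrightarrow> length y = n \<longrightarrow>
            (let s = (\<Sum>R\<in>\<R>. w R * (if (x, y) \<in> R then 1 else 0)) in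
             (if f x y then 1 - 2 powr (- real d) \<le> s \<and> s \<le> 1
              else 0 \<le> s \<and> s \<le> 2 powr (- real d))))))"
proof (rule exI[of _ "1200::real"], rule conjI)
  show "(1200::real) > 0" by simp
next
  show "\<forall>(n::nat) (f::bool list \<Rightarrow> bool list \<Rightarrow> bool) (d::nat) (c::nat) N ka rs q.
      d \<ge> 1 \<longrightarrow> qprotocol n N ka rs q \<longrightarrow> length rs = c \<longrightarrow> computes_13 n N ka rs q f \<longrightarrow>
      (\<exists>(\<alpha>::real) (\<R>::(bool list \<times> bool list) set set) (w::(bool list \<times> bool list) set \<Rightarrow> real).
         0 \<le> \<alpha> \<and> \<alpha> \<le> 1 \<and> finite \<R> \<and> real (card \<R>) \<le> 2 powr (1200 * real d * real c) \<and>
         (\<forall>R\<in>\<R>. is_rectangle n R \<and> (w R = \<alpha> \<or> w R = - \<alpha>)) \<and>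
         (\<forall>x y. length x = n \<longrightarrow> length y = n \<longrightarrow>
            (let s = (\<Sum>R\<in>\<R>. w R * (if (x, y) \<in> R then 1 else 0)) in
             (if f x y then 1 - 2 powr (- real d) \<le> s \<and> s \<le> 1
              else 0 \<le> s \<and> s \<le> 2 powr (- real d)))))"
  proof (intro allI impI)
  fix n :: nat and f :: "bool list \<Rightarrow> bool list \<Rightarrow> bool" and d c N ka :: nat and rs q
  assume d: "1 \<le> d" and qp: "qprotocol n N ka rs q" and lc: "length rs = c" and comp: "computes_13 n N ka rs q f"
  have "\<exists>\<alpha> \<R> w. good n f d \<alpha> \<R> w \<and> real (card \<R>) \<le> 2 powr (1200 * real d * real c)"
  proof (cases "c = 0")
    case True
    then have "rs = []" using lc by simp
    then obtain \<alpha> \<R> w where "good n f d \<alpha> \<R> w" "card \<R> \<le> 1" using zero_case[OF qp _ comp] by blast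
    then show ?thesis using True by (intro exI[of _ \<alpha>] exI[of _ \<R>] exI[of _ w]) auto
  next
    case False
    then have c: "1 \<le> c" by simp
    obtain \<alpha> \<R> w where g: "good n f d \<alpha> \<R> w" "card \<R> \<le> 2 ^ (1200 * d * c)"
      using approx_case[OF d c qp lc comp] by blast
    have "real (card \<R>) \<le> 2 ^ (1200 * d * c)" using g(2) by (metis of_nat_le_iff of_nat_numeral of_nat_power)
    also have "\<dots> = 2 powr (1200 * real d * real c)"
      by (simp add: powr_realpow[symmetric])
    finally show ?thesis using g(1) by blast
  qed
  then show "\<exists>(\<alpha>::real) (\<R>::(bool list \<times> bool list) set set) (w::(bool list \<times> bool list) set \<Rightarrow> real).
         0 \<le> \<alpha> \<and> \<alpha> \<le> 1 \<and> finite \<R> \<and> real (card \<R>) \<le> 2 powr (1200 * real d * real c) \<and>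
         (\<forall>R\<in>\<R>. is_rectangle n R \<and> (w R = \<alpha> \<or> w R = - \<alpha>)) \<and>
         (\<forall>x y. length x = n \<longrightarrow> length y = n \<longrightarrow>
            (let s = (\<Sum>R\<in>\<R>. w R * (if (x, y) \<in> R then 1 else 0)) in
             (if f x y then 1 - 2 powr (- real d) \<le> s \<and> s \<le> 1
              else 0 \<le> s \<and> s \<le> 2 powr (- real d))))"
    unfolding good_def by blast
  qed
qed

end
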